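(* Let $\mathbb{B}$ be a partial $\sigma^{brdg}$-structure. Then $\mathbb{B}$ is a partial substructure of some square-increasing brdg (one satisfying $x\leqslant x\circ x$) if and only if its $\{\wedge,\vee,0,1,\leqslant\}$-reduct is a partial bounded lattice and there exists a set $\mathcal F$ of prime filters of $\mathbb{B}$, each of which additionally satisfies (a) $a,b\in f$ and $(a,b)\in\mathrm{dom}(\circ^{\mathbb{B}})$ imply $a\circ^{\mathbb{B}}b\in f$, (b) $a\in f$, $a\backslash^{\mathbb{B}}b\in f$ with $(a,b)\in\mathrm{dom}(\backslash^{\mathbb{B}})$ imply $b\in f$, (c) $a/^{\mathbb{B}}b\in f$, $b\in f$ with $(a,b)\in\mathrm{dom}(/^{\mathbb{B}})$ imply $a\in f$, such that $\mathcal F$ satisfies (D), (M$_\circ$), (M$_\backslash$) and (M$_/$): (M$_\circ$) for all $h\in\mathcal F$ and $(a,b)\in\mathrm{dom}(\circ^{\mathbb{B}})$ with $a\circ^{\mathbb{B}}b\in h$ there are $f,g\in\mathcal F$ with $a\in f$, $b\in g$, $R^{\mathbb{B}}(f,g,h)$; (M$_\backslash$) for all $g\in\mathcal F$ and $(a,b)\in\mathrm{dom}(\backslash^{\mathbb{B}})$ with $a\backslash^{\mathbb{B}}b\notin g$ there are $f,h\in\mathcal F$ with $a\in f$, $b\notin h$, $R^{\mathbb{B}}(f,g,h)$; (M$_/$) for all $f\in\mathcal F$ and $(a,b)\in\mathrm{dom}(/^{\mathbb{B}})$ with $a/^{\mathbb{B}}b\notin f$ there are $g,h\in\mathcal F$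 with $b\in g$, $a\notin h$, $R^{\mathbb{B}}(f,g,h)$.
   Context: A brdg is an algebra $\langle A,\wedge,\vee,\circ,\backslash,/,0,1,\leqslant\rangle$ where $\langle A,\wedge,\vee,0,1\rangle$ is a bounded distributive lattice with natural order $\leqslant$ and $\circ,\backslash,/$ are binary operations with $x\circ y\leqslant z\iff y\leqslant x\backslash z\iff x\leqslant z/y$. The language $\sigma^{brdg}$ has binary operation symbols $\wedge,\vee,\circ,\backslash,/$, constants $0,1$ and relation symbol $\leqslant$. A partial $\sigma^{brdg}$-structure $\mathbb{B}$ consists of a nonempty set $B$, for each binary operation symbol $\delta$ a partial function $\delta^{\mathbb{B}}:\mathrm{dom}(\delta^{\mathbb{B}})\to B$ with $\mathrm{dom}(\delta^{\mathbb{B}})\subseteq B^2$, elements $0^{\mathbb{B}},1^{\mathbb{B}}\in B$ and a binary relation $\leqslant^{\mathbb{B}}$ on $B$. It is a partial substructure of $\mathbb{A}$ if $B\subseteq A$, each $\delta^{\mathbb{B}}$ agrees with $\delta^{\mathbb{A}}$ on its domain, constants coincide and $\leqslant^{\mathbb{B}}=\leqslant^{\mathbb{A}}\cap B^2$. The reduct is a partial bounded lattice if $\leqslant^{\mathbb{B}}$ is a partial order with least element $0^{\mathbb{B}}$ and greatest $1^{\mathbb{B}}$, and any defined $a\wedge^{\mathbb{B}}b$ (resp. $a\vee^{\mathbb{B}}b$) is the greatest lower (resp. least upper) bound of $\{a,b\}$ w.r.t. $\leqslant^{\mathbb{B}}$. A prime filter of $\mathbb{B}$ is $f\subseteq B$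 with $1^{\mathbb{B}}\in f$, $0^{\mathbb{B}}\notin f$, $f$ upward closed under $\leqslant^{\mathbb{B}}$, $a,b\in f$ and $a\wedge^{\mathbb{B}}b$ defined imply $a\wedge^{\mathbb{B}}b\in f$, and $a,b\notin f$ and $a\vee^{\mathbb{B}}b$ defined imply $a\vee^{\mathbb{B}}b\notin f$. Condition (D): for all $a,b\in B$ with $a\not\leqslant^{\mathbb{B}}b$ there is $f\in\mathcal F$ with $a\in f$, $b\notin f$. $R^{\mathbb{B}}(f,g,h)$ holds iff: for all $(a,b)\in\mathrm{dom}(\circ^{\mathbb{B}})$, $a\in f,b\in g$ imply $a\circ^{\mathbb{B}}b\in h$; for all $(a,b)\in\mathrm{dom}(\backslash^{\mathbb{B}})$, $a\in f, a\backslash^{\mathbb{B}}b\in g$ imply $b\in h$; for all $(a,b)\in\mathrm{dom}(/^{\mathbb{B}})$, $b/^{\mathbb{B}}a\in f$, $a\in g$ imply $b\in h$. *)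

theory Defs
  imports Main
begin

text \<open>Binary operations are partial
  functions, represented with option: (a,b) is in the domain of an operation iff
  both arguments are in the carrier and the value is not None.\<close>

record 'a pstruct =
  pcar  :: "'a set"
  pmeet :: "'a \<Rightarrow> 'a \<Rightarrow> 'a option"
  pjoin :: "'a \<Rightarrow> 'a \<Rightarrow> 'a option"
  pfus  :: "'a \<Rightarrow> 'a \<Rightarrow> 'a option"
  pldiv :: "'a \<Rightarrow> 'a \<Rightarrow> 'a option"
  prdiv :: "'a \<Rightarrow> 'a \<Rightarrow> 'a option"
  pbot  :: 'a
  ptop  :: 'a
  ple   :: "'a \<Rightarrow> 'a \<Rightarrow> bool"

definition pdom :: "('a \<Rightarrow> 'a \<Rightarrow> 'a option) \<Rightarrow> 'a set \<Rightarrow> ('a \<times> 'a) set" where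
  "pdom op B = {(a, b). a \<in> B \<and> b \<in> B \<and> op a b \<noteq> None}"

definition pval :: "('a \<Rightarrow> 'a \<Rightarrow> 'a option) \<Rightarrow> 'a \<Rightarrow> 'a \<Rightarrow> 'a" where
  "pval op a b = the (op a b)"

definition pops :: "'a pstruct \<Rightarrow> ('a \<Rightarrow> 'a \<Rightarrow> 'a option) list" where
  "pops S = [pmeet S, pjoin S, pfus S, pldiv S, prdiv S]"

definition partial_structure :: "'a pstruct \<Rightarrow> bool" where
  "partial_structure S \<longleftrightarrow> pcar S \<noteq> {}
     \<and> (\<forall>op \<in> set (pops S). \<forall>a \<in> pcar S. \<forall>b \<in> pcar S. \<forall>c. op a b = Some c \<longrightarrow> c \<in> pcar S)
     \<and> pbot S \<in> pcar S \<and> ptop S \<in> pcar S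
     \<and> (\<forall>a b. ple S a b \<longrightarrow> a \<in> pcar S \<and> b \<in> pcar S)"

definition is_brdg :: "'a pstruct \<Rightarrow> bool" where
  "is_brdg A \<longleftrightarrow> partial_structure A
     \<and> (\<forall>op \<in> set (pops A). \<forall>a \<in> pcar A. \<forall>b \<in> pcar A. op a b \<noteq> None)
     \<and> (let A' = pcar A; m = pval (pmeet A); j = pval (pjoin A); f = pval (pfus A);
            l = pval (pldiv A); r = pval (prdiv A); le = ple A; z = pbot A; u = ptop A in
        (\<forall>x\<in>A'. \<forall>y\<in>A'. m x y = m y x \<and> j x y = j y x)
      \<and> (\<forall>x\<in>A'. \<forall>y\<in>A'. \<forall>w\<in>A'. m x (m y w) = m (m x y) w \<and> j x (j y w) = j (j x y) w)
      \<and> (\<forall>x\<in>A'. \<forall>y\<in>A'. m x (j x y) = x \<and> j x (m x y) = x)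
      \<and> (\<forall>x\<in>A'. \<forall>y\<in>A'. \<forall>w\<in>A'. m x (j y w) = j (m x y) (m x w))
      \<and> (\<forall>x\<in>A'. j x z = x \<and> m x u = x)
      \<and> (\<forall>x\<in>A'. \<forall>y\<in>A'. le x y \<longleftrightarrow> m x y = x)
      \<and> (\<forall>x\<in>A'. \<forall>y\<in>A'. \<forall>w\<in>A'.
            (le (f x y) w \<longleftrightarrow> le y (l x w)) \<and> (le (f x y) w \<longleftrightarrow> le x (r w y))))"

definition square_increasing_brdg :: "'a pstruct \<Rightarrow> bool" where
  "square_increasing_brdg A \<longleftrightarrow> is_brdg A
     \<and> (\<forall>x \<in> pcar A. ple A x (pval (pfus A) x x))"

text \<open>Partial substructure up to isomorphism: e is an injective map from the carrier of B
  into the carrier of A such that the image of B (with operations restricted to the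
  images of the domains of B) is a partial substructure of A in the sense of the paper.\<close>
definition partial_substructure_via :: "'a pstruct \<Rightarrow> 'b pstruct \<Rightarrow> ('a \<Rightarrow> 'b) \<Rightarrow> bool" where
  "partial_substructure_via B A e \<longleftrightarrow>
     inj_on e (pcar B) \<and> e ` pcar B \<subseteq> pcar A
     \<and> e (pbot B) = pbot A \<and> e (ptop B) = ptop A
     \<and> (\<forall>a \<in> pcar B. \<forall>b \<in> pcar B. \<forall>c.
          (pmeet B a b = Some c \<longrightarrow> pmeet A (e a) (e b) = Some (e c))
        \<and> (pjoin B a b = Some c \<longrightarrow> pjoin A (e a) (e b) = Some (e c))
        \<and> (pfus B a b = Some c \<longrightarrow> pfus A (e a) (e b) = Some (e c))
        \<and> (pldiv B a b = Some c \<longrightarrow> pldiv A (e a) (e b) = Some (e c))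
        \<and> (prdiv B a b = Some c \<longrightarrow> prdiv A (e a) (e b) = Some (e c)))
     \<and> (\<forall>a \<in> pcar B. \<forall>b \<in> pcar B. ple B a b \<longleftrightarrow> ple A (e a) (e b))"

definition partial_bounded_lattice :: "'a pstruct \<Rightarrow> bool" where
  "partial_bounded_lattice S \<longleftrightarrow>
     (let B = pcar S; le = ple S in
       (\<forall>x\<in>B. le x x) \<and> (\<forall>x\<in>B. \<forall>y\<in>B. le x y \<and> le y x \<longrightarrow> x = y)
     \<and> (\<forall>x\<in>B. \<forall>y\<in>B. \<forall>w\<in>B. le x y \<and> le y w \<longrightarrow> le x w)
     \<and> (\<forall>x\<in>B. le (pbot S) x \<and> le x (ptop S))
     \<and> (\<forall>(a, b) \<in> pdom (pmeet S) B. let c = pval (pmeet S) a b in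
           le c a \<and> le c b \<and> (\<forall>x\<in>B. le x a \<and> le x b \<longrightarrow> le x c))
     \<and> (\<forall>(a, b) \<in> pdom (pjoin S) B. let c = pval (pjoin S) a b in
           le a c \<and> le b c \<and> (\<forall>x\<in>B. le a x \<and> le b x \<longrightarrow> le c x)))"

definition prime_filter :: "'a pstruct \<Rightarrow> 'a set \<Rightarrow> bool" where
  "prime_filter S f \<longleftrightarrow> f \<subseteq> pcar S \<and> ptop S \<in> f \<and> pbot S \<notin> f
     \<and> (\<forall>a \<in> f. \<forall>b \<in> pcar S. ple S a b \<longrightarrow> b \<in> f)
     \<and> (\<forall>(a, b) \<in> pdom (pmeet S) (pcar S). a \<in> f \<and> b \<in> f \<longrightarrow> pval (pmeet S) a b \<in> f)
     \<and> (\<forall>(a, b) \<in> pdom (pjoin S) (pcar S). a \<notin> f \<and> b \<notin> f \<longrightarrow> pval (pjoin S) a b \<notin> f)"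

definition closed_filter :: "'a pstruct \<Rightarrow> 'a set \<Rightarrow> bool" where
  "closed_filter S f \<longleftrightarrow>
       (\<forall>(a, b) \<in> pdom (pfus S) (pcar S). a \<in> f \<and> b \<in> f \<longrightarrow> pval (pfus S) a b \<in> f)
     \<and> (\<forall>(a, b) \<in> pdom (pldiv S) (pcar S). a \<in> f \<and> pval (pldiv S) a b \<in> f \<longrightarrow> b \<in> f)
     \<and> (\<forall>(a, b) \<in> pdom (prdiv S) (pcar S). pval (prdiv S) a b \<in> f \<and> b \<in> f \<longrightarrow> a \<in> f)"

definition condD :: "'a pstruct \<Rightarrow> 'a set set \<Rightarrow> bool" where
  "condD S F \<longleftrightarrow> (\<forall>a \<in> pcar S. \<forall>b \<in> pcar S. \<not> ple S a b \<longrightarrow> (\<exists>f \<in> F. a \<in> f \<and> b \<notin> f))"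

definition relR :: "'a pstruct \<Rightarrow> 'a set \<Rightarrow> 'a set \<Rightarrow> 'a set \<Rightarrow> bool" where
  "relR S f g h \<longleftrightarrow>
       (\<forall>(a, b) \<in> pdom (pfus S) (pcar S). a \<in> f \<and> b \<in> g \<longrightarrow> pval (pfus S) a b \<in> h)
     \<and> (\<forall>(a, b) \<in> pdom (pldiv S) (pcar S). a \<in> f \<and> pval (pldiv S) a b \<in> g \<longrightarrow> b \<in> h)
     \<and> (\<forall>(b, a) \<in> pdom (prdiv S) (pcar S). pval (prdiv S) b a \<in> f \<and> a \<in> g \<longrightarrow> b \<in> h)"

definition condM_fus :: "'a pstruct \<Rightarrow> 'a set set \<Rightarrow> bool" where
  "condM_fus S F \<longleftrightarrow> (\<forall>h \<in> F. \<forall>(a, b) \<in> pdom (pfus S) (pcar S).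
      pval (pfus S) a b \<in> h \<longrightarrow> (\<exists>f \<in> F. \<exists>g \<in> F. a \<in> f \<and> b \<in> g \<and> relR S f g h))"

definition condM_ldiv :: "'a pstruct \<Rightarrow> 'a set set \<Rightarrow> bool" where
  "condM_ldiv S F \<longleftrightarrow> (\<forall>g \<in> F. \<forall>(a, b) \<in> pdom (pldiv S) (pcar S).
      pval (pldiv S) a b \<notin> g \<longrightarrow> (\<exists>f \<in> F. \<exists>h \<in> F. a \<in> f \<and> b \<notin> h \<and> relR S f g h))"

definition condM_rdiv :: "'a pstruct \<Rightarrow> 'a set set \<Rightarrow> bool" where
  "condM_rdiv S F \<longleftrightarrow> (\<forall>f \<in> F. \<forall>(a, b) \<in> pdom (prdiv S) (pcar S).
      pval (prdiv S) a b \<notin> f \<longrightarrow> (\<exists>g \<in> F. \<exists>h \<in> F. b \<in> g \<and> a \<notin> h \<and> relR S f g h))"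

definition representable_sq :: "'a pstruct \<Rightarrow> bool" where
  "representable_sq S \<longleftrightarrow> partial_bounded_lattice S
     \<and> (\<exists>F. (\<forall>f \<in> F. prime_filter S f \<and> closed_filter S f)
            \<and> condD S F \<and> condM_fus S F \<and> condM_ldiv S F \<and> condM_rdiv S F)"

end

theory Submission
  imports Defs
begin

locale brdgL =
  fixes C :: "'b set" and m j f l r :: "'b \<Rightarrow> 'b \<Rightarrow> 'b" and le :: "'b \<Rightarrow> 'b \<Rightarrow> bool"
    and z u :: 'b
  assumes cm: "x \<in> C \<Longrightarrow> y \<in> C \<Longrightarrow> m x y \<in> C"
    and cj: "x \<in> C \<Longrightarrow> y \<in> C \<Longrightarrow> j x y \<in> C"
    and cf: "x \<in> C \<Longrightarrow> y \<in> C \<Longrightarrow> f x y \<in> C"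
    and cl: "x \<in> C \<Longrightarrow> y \<in> C \<Longrightarrow> l x y \<in> C"
    and cr: "x \<in> C \<Longrightarrow> y \<in> C \<Longrightarrow> r x y \<in> C"
    and cz: "z \<in> C" and cu: "u \<in> C"
    and mcomm: "x \<in> C \<Longrightarrow> y \<in> C \<Longrightarrow> m x y = m y x"
    and jcomm: "x \<in> C \<Longrightarrow> y \<in> C \<Longrightarrow> j x y = j y x"
    and massoc: "x \<in> C \<Longrightarrow> y \<in> C \<Longrightarrow> w \<in> C \<Longrightarrow> m x (m y w) = m (m x y) w"
    and jassoc: "x \<in> C \<Longrightarrow> y \<in> C \<Longrightarrow> w \<in> C \<Longrightarrow> j x (j y w) = j (j x y) w"
    and abs1: "x \<in> C \<Longrightarrow> y \<in> C \<Longrightarrow> m x (j x y) = x"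
    and abs2: "x \<in> C \<Longrightarrow> y \<in> C \<Longrightarrow> j x (m x y) = x"
    and dist: "x \<in> C \<Longrightarrow> y \<in> C \<Longrightarrow> w \<in> C \<Longrightarrow> m x (j y w) = j (m x y) (m x w)"
    and jz: "x \<in> C \<Longrightarrow> j x z = x" and mu: "x \<in> C \<Longrightarrow> m x u = x"
    and led: "x \<in> C \<Longrightarrow> y \<in> C \<Longrightarrow> le x y \<longleftrightarrow> m x y = x"
    and res1: "x \<in> C \<Longrightarrow> y \<in> C \<Longrightarrow> w \<in> C \<Longrightarrow> le (f x y) w \<longleftrightarrow> le y (l x w)"
    and res2: "x \<in> C \<Longrightarrow> y \<in> C \<Longrightarrow> w \<in> C \<Longrightarrow> le (f x y) w \<longleftrightarrow> le x (r w y)"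
    and sq: "x \<in> C \<Longrightarrow> le x (f x x)"
begin

lemma midem: "x \<in> C \<Longrightarrow> m x x = x"
  by (metis abs1 abs2 cm)
lemma jidem: "x \<in> C \<Longrightarrow> j x x = x"
  by (metis abs1 abs2 cj)
lemma lrefl: "x \<in> C \<Longrightarrow> le x x" using led midem by blast
lemma lanti: "x \<in> C \<Longrightarrow> y \<in> C \<Longrightarrow> le x y \<Longrightarrow> le y x \<Longrightarrow> x = y"
  using led mcomm by metis
lemma ltrans: "x \<in> C \<Longrightarrow> y \<in> C \<Longrightarrow> w \<in> C \<Longrightarrow> le x y \<Longrightarrow> le y w \<Longrightarrow> le x w"
  using led massoc by metis
lemma lm1: "x \<in> C \<Longrightarrow> y \<in> C \<Longrightarrow> le (m x y) x"
  using led cm massoc midem mcomm by metis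
lemma lm2: "x \<in> C \<Longrightarrow> y \<in> C \<Longrightarrow> le (m x y) y"
  using led cm massoc midem mcomm by metis
lemma glb: "x \<in> C \<Longrightarrow> y \<in> C \<Longrightarrow> w \<in> C \<Longrightarrow> le w x \<Longrightarrow> le w y \<Longrightarrow> le w (m x y)"
  using led cm massoc by metis
lemma lej: "x \<in> C \<Longrightarrow> y \<in> C \<Longrightarrow> le x y \<longleftrightarrow> j x y = y"
  using led abs1 abs2 mcomm jcomm by metis
lemma lj1: "x \<in> C \<Longrightarrow> y \<in> C \<Longrightarrow> le x (j x y)"
  using led abs1 cj by metis
lemma lj2: "x \<in> C \<Longrightarrow> y \<in> C \<Longrightarrow> le y (j x y)"
  using lj1 jcomm by metis
lemma lub: "x \<in> C \<Longrightarrow> y \<in> C \<Longrightarrow> w \<in> C \<Longrightarrow> le x w \<Longrightarrow> le y w \<Longrightarrow> le (j x y) w"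
  using lej cj jassoc by metis
lemma lbot: "x \<in> C \<Longrightarrow> le z x" using lej jz jcomm cz by metis
lemma ltop: "x \<in> C \<Longrightarrow> le x u" using led mu cu by metis
lemma fmono1: "x \<in> C \<Longrightarrow> x' \<in> C \<Longrightarrow> y \<in> C \<Longrightarrow> le x x' \<Longrightarrow> le (f x y) (f x' y)"
  by (meson cf cr lrefl ltrans res2)
lemma fmono2: "x \<in> C \<Longrightarrow> y \<in> C \<Longrightarrow> y' \<in> C \<Longrightarrow> le y y' \<Longrightarrow> le (f x y) (f x y')"
  by (meson cf cl lrefl ltrans res1)
lemma fjoin1: "x \<in> C \<Longrightarrow> x' \<in> C \<Longrightarrow> y \<in> C \<Longrightarrow> le (f (j x x') y) (j (f x y) (f x' y))"
  by (smt (verit) cf cj cr lj1 lj2 lub res2)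
lemma fjoin2: "x \<in> C \<Longrightarrow> y \<in> C \<Longrightarrow> y' \<in> C \<Longrightarrow> le (f x (j y y')) (j (f x y) (f x y'))"
  by (smt (verit) cf cj cl lj1 lj2 lub res1)
lemma fz1: "y \<in> C \<Longrightarrow> le (f z y) z" by (meson cr cz lbot res2)
lemma fz2: "x \<in> C \<Longrightarrow> le (f x z) z" by (meson cl cz lbot res1)
lemma resl: "x \<in> C \<Longrightarrow> y \<in> C \<Longrightarrow> le (f x (l x y)) y" by (meson cl lrefl res1)
lemma resr: "x \<in> C \<Longrightarrow> y \<in> C \<Longrightarrow> le (f (r y x) x) y" by (meson cr lrefl res2)

lemma mmono: "x \<in> C \<Longrightarrow> x' \<in> C \<Longrightarrow> y \<in> C \<Longrightarrow> y' \<in> C \<Longrightarrow> le x x' \<Longrightarrow> le y y' \<Longrightarrow> le (m x y) (m x' y')"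
proof -
  assume a: "x \<in> C" "x' \<in> C" "y \<in> C" "y' \<in> C" "le x x'" "le y y'"
  have "le (m x y) x'" using ltrans[OF cm[OF a(1,3)] a(1) a(2) lm1[OF a(1,3)] a(5)] .
  moreover have "le (m x y) y'" using ltrans[OF cm[OF a(1,3)] a(3) a(4) lm2[OF a(1,3)] a(6)] .
  ultimately show ?thesis using glb[OF a(2,4) cm[OF a(1,3)]] by blast
qed
lemma jmono: "x \<in> C \<Longrightarrow> x' \<in> C \<Longrightarrow> y \<in> C \<Longrightarrow> y' \<in> C \<Longrightarrow> le x x' \<Longrightarrow> le y y' \<Longrightarrow> le (j x y) (j x' y')"
proof -
  assume a: "x \<in> C" "x' \<in> C" "y \<in> C" "y' \<in> C" "le x x'" "le y y'"
  have "le x (j x' y')" using ltrans[OF a(1) a(2) cj[OF a(2,4)] a(5) lj1[OF a(2,4)]] .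
  moreover have "le y (j x' y')" using ltrans[OF a(3) a(4) cj[OF a(2,4)] a(6) lj2[OF a(2,4)]] .
  ultimately show ?thesis using lub[OF a(1,3) cj[OF a(2,4)]] by blast
qed

definition "filt S \<longleftrightarrow> S \<subseteq> C \<and> (\<forall>x\<in>S. \<forall>y\<in>C. le x y \<longrightarrow> y \<in> S) \<and> (\<forall>x\<in>S. \<forall>y\<in>S. m x y \<in> S)"
definition "idl I \<longleftrightarrow> I \<subseteq> C \<and> (\<forall>x\<in>I. \<forall>y\<in>C. le y x \<longrightarrow> y \<in> I) \<and> (\<forall>x\<in>I. \<forall>y\<in>I. j x y \<in> I)"
definition "pf P \<longleftrightarrow> filt P \<and> u \<in> P \<and> z \<notin> P \<and> (\<forall>x\<in>C. \<forall>y\<in>C. j x y \<in> P \<longrightarrow> x \<in> P \<or> y \<in> P)"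


lemma pft:
  assumes S: "filt S" "S \<noteq> {}" and I: "idl I" "z \<in> I" and dis: "S \<inter> I = {}"
  shows "\<exists>P. pf P \<and> S \<subseteq> P \<and> P \<inter> I = {}"
proof -
  define AA where "AA = {P. filt P \<and> S \<subseteq> P \<and> P \<inter> I = {}}"
  have "\<exists>M\<in>AA. \<forall>X\<in>AA. M \<subseteq> X \<longrightarrow> X = M"
  proof (rule subset_Zorn_nonempty)
    show "AA \<noteq> {}" using S dis unfolding AA_def by blast
  next
    fix CC assume ne: "CC \<noteq> {}" and ch: "subset.chain AA CC"
    have sub: "CC \<subseteq> AA" and tot: "\<forall>X\<in>CC. \<forall>Y\<in>CC. X \<subseteq> Y \<or> Y \<subseteq> X"
      using ch by (auto simp: subset_chain_def)
    have "filt (\<Union>CC)"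
      unfolding filt_def
    proof (intro conjI ballI impI)
      show "\<Union>CC \<subseteq> C" using sub unfolding AA_def filt_def by blast
    next
      fix x y assume "x \<in> \<Union>CC" "y \<in> C" "le x y"
      then show "y \<in> \<Union>CC" using sub unfolding AA_def filt_def by blast
    next
      fix x y assume "x \<in> \<Union>CC" "y \<in> \<Union>CC"
      then obtain X Y where "X \<in> CC" "Y \<in> CC" "x \<in> X" "y \<in> Y" by blast
      with tot have "x \<in> X \<and> y \<in> X \<or> x \<in> Y \<and> y \<in> Y" by blast
      then show "m x y \<in> \<Union>CC" using sub \<open>X \<in> CC\<close> \<open>Y \<in> CC\<close> unfolding AA_def filt_def by blast
    qed
    then show "\<Union>CC \<in> AA" using ne sub unfolding AA_def by blast
  qed
  then obtain M where M: "M \<in> AA" and mx: "\<And>X. X \<in> AA \<Longrightarrow> M \<subseteq> X \<Longrightarrow> X = M" by blast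
  have fM: "filt M" and SM: "S \<subseteq> M" and MI: "M \<inter> I = {}" using M unfolding AA_def by auto
  have MC: "M \<subseteq> C" and upM: "\<And>x y. x \<in> M \<Longrightarrow> y \<in> C \<Longrightarrow> le x y \<Longrightarrow> y \<in> M"
    and mM: "\<And>x y. x \<in> M \<Longrightarrow> y \<in> M \<Longrightarrow> m x y \<in> M" using fM unfolding filt_def by auto
  have IC: "I \<subseteq> C" and dnI: "\<And>x y. x \<in> I \<Longrightarrow> y \<in> C \<Longrightarrow> le y x \<Longrightarrow> y \<in> I"
    and jI: "\<And>x y. x \<in> I \<Longrightarrow> y \<in> I \<Longrightarrow> j x y \<in> I" using I unfolding idl_def by auto
  obtain s where s: "s \<in> M" using S SM by blast
  have key: "\<exists>p\<in>M. \<exists>i\<in>I. le (m p a) i" if a: "a \<in> C" "a \<notin> M" for a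
  proof (rule ccontr)
    assume nk: "\<not> ?thesis"
    define Ma where "Ma = {y\<in>C. \<exists>p\<in>M. le (m p a) y}"
    have "filt Ma" unfolding filt_def
    proof (intro conjI ballI impI)
      show "Ma \<subseteq> C" unfolding Ma_def by blast
    next
      fix x y assume "x \<in> Ma" "y \<in> C" "le x y"
      then obtain p where "p \<in> M" "le (m p a) x" "x \<in> C" unfolding Ma_def by blast
      moreover then have "le (m p a) y" using ltrans[of "m p a" x y] cm MC a \<open>y \<in> C\<close> \<open>le x y\<close> by blast
      ultimately show "y \<in> Ma" unfolding Ma_def using \<open>y \<in> C\<close> by blast
    next
      fix x y assume "x \<in> Ma" "y \<in> Ma"
      then obtain p q where pq: "p \<in> M" "q \<in> M" "le (m p a) x" "le (m q a) y" "x \<in> C" "y \<in> C"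
        unfolding Ma_def by blast
      have pqC: "p \<in> C" "q \<in> C" using pq MC by auto
      have 1: "le (m (m p q) a) (m p a)" using mmono[OF cm[OF pqC] pqC(1) a(1) a(1) lm1[OF pqC] lrefl[OF a(1)]] .
      have 2: "le (m (m p q) a) (m q a)" using mmono[OF cm[OF pqC] pqC(2) a(1) a(1) lm2[OF pqC] lrefl[OF a(1)]] .
      have 3: "le (m (m p q) a) x" using ltrans[OF cm[OF cm[OF pqC] a(1)] cm[OF pqC(1) a(1)] pq(5) 1 pq(3)] .
      have 4: "le (m (m p q) a) y" using ltrans[OF cm[OF cm[OF pqC] a(1)] cm[OF pqC(2) a(1)] pq(6) 2 pq(4)] .
      have "le (m (m p q) a) (m x y)" using glb[OF pq(5,6) cm[OF cm[OF pqC] a(1)] 3 4] .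
      then show "m x y \<in> Ma" unfolding Ma_def using mM pq cm by blast
    qed
    moreover have "M \<subseteq> Ma" unfolding Ma_def using MC a lm1 by blast
    moreover have "Ma \<inter> I = {}" using nk unfolding Ma_def by blast
    ultimately have "Ma \<in> AA" using SM unfolding AA_def by blast
    then have "Ma = M" using mx \<open>M \<subseteq> Ma\<close> by blast
    moreover have "a \<in> Ma" unfolding Ma_def using s MC a lm2 by blast
    ultimately show False using a by blast
  qed
  have "pf M" unfolding pf_def
  proof (intro conjI ballI impI)
    show "filt M" by fact
    show "u \<in> M" using s MC upM ltop cu by blast
    show "z \<notin> M" using MI I by blast
  next
    fix a b assume ab: "a \<in> C" "b \<in> C" "j a b \<in> M"
    show "a \<in> M \<or> b \<in> M"
    proof (rule ccontr)
      assume "\<not> (a \<in> M \<or> b \<in> M)"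
      then obtain p i q i' where pi: "p \<in> M" "i \<in> I" "le (m p a) i" "q \<in> M" "i' \<in> I" "le (m q b) i'"
        using key ab by meson
      have C': "p \<in> C" "q \<in> C" "i \<in> C" "i' \<in> C" using pi MC IC by auto
      define w where "w = m (m p q) (j a b)"
      have wM: "w \<in> M" unfolding w_def using mM pi ab by blast
      have "w = j (m (m p q) a) (m (m p q) b)" unfolding w_def using dist cm C' ab by blast
      moreover have "le (m (m p q) a) i"
        using ltrans[OF cm[OF cm[OF C'(1,2)] ab(1)] cm[OF C'(1) ab(1)] C'(3)
           mmono[OF cm[OF C'(1,2)] C'(1) ab(1) ab(1) lm1[OF C'(1,2)] lrefl[OF ab(1)]] pi(3)] .
      moreover have "le (m (m p q) b) i'"
        using ltrans[OF cm[OF cm[OF C'(1,2)] ab(2)] cm[OF C'(2) ab(2)] C'(4)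
           mmono[OF cm[OF C'(1,2)] C'(2) ab(2) ab(2) lm2[OF C'(1,2)] lrefl[OF ab(2)]] pi(6)] .
      ultimately have "le w (j i i')"
        using jmono[OF cm[OF cm[OF C'(1,2)] ab(1)] C'(3) cm[OF cm[OF C'(1,2)] ab(2)] C'(4)] by simp
      moreover have "j i i' \<in> I" using jI pi by blast
      ultimately have "w \<in> I" using dnI[of "j i i'" w] wM MC by blast
      then show False using wM MI by blast
    qed
  qed
  then show ?thesis using SM MI by blast
qed


lemma pfC: "pf P \<Longrightarrow> P \<subseteq> C" unfolding pf_def filt_def by blast
lemma pfup: "pf P \<Longrightarrow> a \<in> P \<Longrightarrow> b \<in> C \<Longrightarrow> le a b \<Longrightarrow> b \<in> P" unfolding pf_def filt_def by blast
lemma pfm: "pf P \<Longrightarrow> a \<in> P \<Longrightarrow> b \<in> P \<Longrightarrow> m a b \<in> P" unfolding pf_def filt_def by blast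
lemma pfj: "pf P \<Longrightarrow> a \<in> C \<Longrightarrow> b \<in> C \<Longrightarrow> a \<notin> P \<Longrightarrow> b \<notin> P \<Longrightarrow> j a b \<notin> P" unfolding pf_def by blast
lemma pfu: "pf P \<Longrightarrow> u \<in> P" unfolding pf_def by blast
lemma pfz: "pf P \<Longrightarrow> z \<notin> P" unfolding pf_def by blast
lemma pffilt: "pf P \<Longrightarrow> filt P" unfolding pf_def by blast
lemma pfdown: "pf P \<Longrightarrow> b \<notin> P \<Longrightarrow> a \<in> C \<Longrightarrow> b \<in> C \<Longrightarrow> le a b \<Longrightarrow> a \<notin> P" using pfup by blast

lemma upfilt: "x \<in> C \<Longrightarrow> filt {y\<in>C. le x y}"
  unfolding filt_def
proof (intro conjI ballI impI)
  fix a b assume "x \<in> C" "a \<in> {y\<in>C. le x y}" "b \<in> C" "le a b"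
  then show "b \<in> {y\<in>C. le x y}" using ltrans[of x a b] by blast
next
  fix a b assume "x \<in> C" "a \<in> {y\<in>C. le x y}" "b \<in> {y\<in>C. le x y}"
  then show "m a b \<in> {y\<in>C. le x y}" using glb[of a b x] cm[of a b] by blast
qed auto
lemma downidl: "x \<in> C \<Longrightarrow> idl {y\<in>C. le y x}"
  unfolding idl_def
proof (intro conjI ballI impI)
  fix a b assume "x \<in> C" "a \<in> {y\<in>C. le y x}" "b \<in> C" "le b a"
  then show "b \<in> {y\<in>C. le y x}" using ltrans[of b a x] by blast
next
  fix a b assume "x \<in> C" "a \<in> {y\<in>C. le y x}" "b \<in> {y\<in>C. le y x}"
  then show "j a b \<in> {y\<in>C. le y x}" using lub[of a b x] cj[of a b] by blast
qed auto

lemma Lleft: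
  assumes H: "pf H" and Q: "filt Q" "u \<in> Q" and x: "x \<in> C" and xq: "\<forall>q\<in>Q. f x q \<in> H"
  shows "\<exists>P. pf P \<and> x \<in> P \<and> (\<forall>p\<in>P. \<forall>q\<in>Q. f p q \<in> H)"
proof -
  have QC: "Q \<subseteq> C" using Q unfolding filt_def by blast
  define I where "I = {v\<in>C. \<exists>q\<in>Q. f v q \<notin> H}"
  have "idl I" unfolding idl_def
  proof (intro conjI ballI impI)
    show "I \<subseteq> C" unfolding I_def by blast
  next
    fix v y assume "v \<in> I" "y \<in> C" "le y v"
    then obtain q where q: "q \<in> Q" "f v q \<notin> H" "v \<in> C" unfolding I_def by blast
    have "f y q \<notin> H" using pfdown[OF H q(2) cf cf fmono1] q QC \<open>y \<in> C\<close> \<open>le y v\<close> by blast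
    then show "y \<in> I" unfolding I_def using q \<open>y \<in> C\<close> by blast
  next
    fix v v' assume "v \<in> I" "v' \<in> I"
    then obtain q q' where q: "q \<in> Q" "f v q \<notin> H" "v \<in> C" "q' \<in> Q" "f v' q' \<notin> H" "v' \<in> C"
      unfolding I_def by blast
    have qC: "q \<in> C" "q' \<in> C" using q QC by auto
    have qq: "m q q' \<in> Q" using Q q unfolding filt_def by blast
    have c1: "f v (m q q') \<notin> H"
      using pfdown[OF H q(2) cf[OF q(3) cm[OF qC]] cf[OF q(3) qC(1)] fmono2[OF q(3) cm[OF qC] qC(1) lm1[OF qC]]] .
    have c2: "f v' (m q q') \<notin> H"
      using pfdown[OF H q(5) cf[OF q(6) cm[OF qC]] cf[OF q(6) qC(2)] fmono2[OF q(6) cm[OF qC] qC(2) lm2[OF qC]]] .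
    have "j (f v (m q q')) (f v' (m q q')) \<notin> H"
      using pfj[OF H cf[OF q(3) cm[OF qC]] cf[OF q(6) cm[OF qC]] c1 c2] .
    then have "f (j v v') (m q q') \<notin> H"
      using pfdown[OF H _ cf[OF cj[OF q(3,6)] cm[OF qC]] cj[OF cf[OF q(3) cm[OF qC]] cf[OF q(6) cm[OF qC]]]
          fjoin1[OF q(3,6) cm[OF qC]]] by blast
    then show "j v v' \<in> I" unfolding I_def using qq cj q by blast
  qed
  moreover have "z \<in> I"
  proof -
    have "f z u \<notin> H" using pfdown[OF H pfz[OF H] cf[OF cz cu] cz fz1[OF cu]] .
    then show ?thesis unfolding I_def using Q cz by blast
  qed
  moreover have "{y\<in>C. le x y} \<inter> I = {}"
  proof (rule ccontr)
    assume "\<not> ?thesis"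
    then obtain y q where y: "y \<in> C" "le x y" "q \<in> Q" "f y q \<notin> H" unfolding I_def by blast
    have "f x q \<notin> H" using pfdown[OF H y(4) cf cf fmono1[OF x y(1) _ y(2)]] y QC x by blast
    then show False using xq y by blast
  qed
  moreover have "{y\<in>C. le x y} \<noteq> {}" using x lrefl by blast
  ultimately obtain P where P: "pf P" "{y\<in>C. le x y} \<subseteq> P" "P \<inter> I = {}"
    using pft[OF upfilt[OF x]] by blast
  have "x \<in> P" using P x lrefl by blast
  moreover have "\<forall>p\<in>P. \<forall>q\<in>Q. f p q \<in> H" using P pfC[OF P(1)] unfolding I_def by blast
  ultimately show ?thesis using P by blast
qed

lemma Lright:
  assumes H: "pf H" and P: "filt P" "u \<in> P" and y: "y \<in> C" and py: "\<forall>p\<in>P. f p y \<in> H"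
  shows "\<exists>Q. pf Q \<and> y \<in> Q \<and> (\<forall>p\<in>P. \<forall>q\<in>Q. f p q \<in> H)"
proof -
  have PC: "P \<subseteq> C" using P unfolding filt_def by blast
  define I where "I = {v\<in>C. \<exists>p\<in>P. f p v \<notin> H}"
  have "idl I" unfolding idl_def
  proof (intro conjI ballI impI)
    show "I \<subseteq> C" unfolding I_def by blast
  next
    fix v w assume "v \<in> I" "w \<in> C" "le w v"
    then obtain p where p: "p \<in> P" "f p v \<notin> H" "v \<in> C" unfolding I_def by blast
    have "f p w \<notin> H" using pfdown[OF H p(2) cf cf fmono2] p PC \<open>w \<in> C\<close> \<open>le w v\<close> by blast
    then show "w \<in> I" unfolding I_def using p \<open>w \<in> C\<close> by blast
  next
    fix v v' assume "v \<in> I" "v' \<in> I"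
    then obtain q q' where q: "q \<in> P" "f q v \<notin> H" "v \<in> C" "q' \<in> P" "f q' v' \<notin> H" "v' \<in> C"
      unfolding I_def by blast
    have qC: "q \<in> C" "q' \<in> C" using q PC by auto
    have qq: "m q q' \<in> P" using P q unfolding filt_def by blast
    have c1: "f (m q q') v \<notin> H"
      using pfdown[OF H q(2) cf[OF cm[OF qC] q(3)] cf[OF qC(1) q(3)] fmono1[OF cm[OF qC] qC(1) q(3) lm1[OF qC]]] .
    have c2: "f (m q q') v' \<notin> H"
      using pfdown[OF H q(5) cf[OF cm[OF qC] q(6)] cf[OF qC(2) q(6)] fmono1[OF cm[OF qC] qC(2) q(6) lm2[OF qC]]] .
    have "j (f (m q q') v) (f (m q q') v') \<notin> H"
      using pfj[OF H cf[OF cm[OF qC] q(3)] cf[OF cm[OF qC] q(6)] c1 c2] .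
    then have "f (m q q') (j v v') \<notin> H"
      using pfdown[OF H _ cf[OF cm[OF qC] cj[OF q(3,6)]] cj[OF cf[OF cm[OF qC] q(3)] cf[OF cm[OF qC] q(6)]]
          fjoin2[OF cm[OF qC] q(3,6)]] by blast
    then show "j v v' \<in> I" unfolding I_def using qq cj q by blast
  qed
  moreover have "z \<in> I"
  proof -
    have "f u z \<notin> H" using pfdown[OF H pfz[OF H] cf[OF cu cz] cz fz2[OF cu]] .
    then show ?thesis unfolding I_def using P cz by blast
  qed
  moreover have "{w\<in>C. le y w} \<inter> I = {}"
  proof (rule ccontr)
    assume "\<not> ?thesis"
    then obtain w q where w: "w \<in> C" "le y w" "q \<in> P" "f q w \<notin> H" unfolding I_def by blast
    have "f q y \<notin> H" using pfdown[OF H w(4) cf cf fmono2[OF _ y w(1) w(2)]] w PC y by blast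
    then show False using py w by blast
  qed
  moreover have "{w\<in>C. le y w} \<noteq> {}" using y lrefl by blast
  ultimately obtain Q where Q: "pf Q" "{w\<in>C. le y w} \<subseteq> Q" "Q \<inter> I = {}"
    using pft[OF upfilt[OF y]] by blast
  have "y \<in> Q" using Q y lrefl by blast
  moreover have "\<forall>p\<in>P. \<forall>q\<in>Q. f p q \<in> H" using Q pfC[OF Q(1)] unfolding I_def by blast
  ultimately show ?thesis using Q by blast
qed

lemma Mfus:
  assumes H: "pf H" and x: "x \<in> C" and y: "y \<in> C" and xy: "f x y \<in> H"
  shows "\<exists>P Q. pf P \<and> pf Q \<and> x \<in> P \<and> y \<in> Q \<and> (\<forall>p\<in>P. \<forall>q\<in>Q. f p q \<in> H)"
proof -
  have "\<forall>q\<in>{w\<in>C. le y w}. f x q \<in> H" using pfup[OF H xy] cf x y fmono2 by blast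
  then obtain P where P: "pf P" "x \<in> P" "\<forall>p\<in>P. \<forall>q\<in>{w\<in>C. le y w}. f p q \<in> H"
    using Lleft[OF H upfilt[OF y] _ x] cu y ltop by blast
  have "\<forall>p\<in>P. f p y \<in> H" using P(3) y lrefl by blast
  then obtain Q where "pf Q" "y \<in> Q" "\<forall>p\<in>P. \<forall>q\<in>Q. f p q \<in> H"
    using Lright[OF H pffilt[OF P(1)] pfu[OF P(1)] y] by blast
  then show ?thesis using P by blast
qed

lemma Mldiv:
  assumes G: "pf G" and x: "x \<in> C" and y: "y \<in> C" and xy: "l x y \<notin> G"
  shows "\<exists>P Q. pf P \<and> pf Q \<and> x \<in> P \<and> y \<notin> Q \<and> (\<forall>p\<in>P. \<forall>g\<in>G. f p g \<in> Q)"
proof -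
  have GC: "G \<subseteq> C" using pfC[OF G] .
  define S where "S = {w\<in>C. \<exists>g\<in>G. le (f x g) w}"
  have "filt S" unfolding filt_def
  proof (intro conjI ballI impI)
    show "S \<subseteq> C" unfolding S_def by blast
  next
    fix w w' assume "w \<in> S" "w' \<in> C" "le w w'"
    then show "w' \<in> S" unfolding S_def using ltrans cf x GC by blast
  next
    fix w w' assume "w \<in> S" "w' \<in> S"
    then obtain g g' where g: "g \<in> G" "le (f x g) w" "w \<in> C" "g' \<in> G" "le (f x g') w'" "w' \<in> C"
      unfolding S_def by blast
    have gC: "g \<in> C" "g' \<in> C" using g GC by auto
    have "le (f x (m g g')) w"
      using ltrans[OF cf[OF x cm[OF gC]] cf[OF x gC(1)] g(3) fmono2[OF x cm[OF gC] gC(1) lm1[OF gC]] g(2)] .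
    moreover have "le (f x (m g g')) w'"
      using ltrans[OF cf[OF x cm[OF gC]] cf[OF x gC(2)] g(6) fmono2[OF x cm[OF gC] gC(2) lm2[OF gC]] g(5)] .
    ultimately have "le (f x (m g g')) (m w w')" using glb[OF g(3,6) cf[OF x cm[OF gC]]] by blast
    then show "m w w' \<in> S" unfolding S_def using pfm[OF G g(1,4)] cm g by blast
  qed
  moreover have "S \<noteq> {}" unfolding S_def using pfu[OF G] cf[OF x cu] lrefl by blast
  moreover have "z \<in> {w\<in>C. le w y}" using cz lbot y by blast
  moreover have "S \<inter> {w\<in>C. le w y} = {}"
  proof (rule ccontr)
    assume "\<not> ?thesis"
    then obtain w g where w: "w \<in> C" "le w y" "g \<in> G" "le (f x g) w" unfolding S_def by blast
    have "le (f x g) y" using ltrans[OF cf[OF x] w(1) y w(4) w(2)] w GC by blast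
    then have "le g (l x y)" using res1 x y w GC by blast
    then have "l x y \<in> G" using pfup[OF G w(3) cl[OF x y]] by blast
    then show False using xy by blast
  qed
  ultimately obtain Q where Q: "pf Q" "S \<subseteq> Q" "Q \<inter> {w\<in>C. le w y} = {}"
    using pft downidl[OF y] by blast
  have yQ: "y \<notin> Q" using Q y lrefl by blast
  have "\<forall>g\<in>G. f x g \<in> Q" using Q(2) unfolding S_def using cf x GC lrefl by blast
  then obtain P where "pf P" "x \<in> P" "\<forall>p\<in>P. \<forall>g\<in>G. f p g \<in> Q"
    using Lleft[OF Q(1) pffilt[OF G] pfu[OF G] x] by blast
  then show ?thesis using Q yQ by blast
qed

lemma Mrdiv:
  assumes P: "pf P" and x: "x \<in> C" and y: "y \<in> C" and xy: "r x y \<notin> P"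
  shows "\<exists>G H. pf G \<and> pf H \<and> y \<in> G \<and> x \<notin> H \<and> (\<forall>p\<in>P. \<forall>g\<in>G. f p g \<in> H)"
proof -
  have PC: "P \<subseteq> C" using pfC[OF P] .
  define S where "S = {w\<in>C. \<exists>p\<in>P. le (f p y) w}"
  have "filt S" unfolding filt_def
  proof (intro conjI ballI impI)
    show "S \<subseteq> C" unfolding S_def by blast
  next
    fix w w' assume "w \<in> S" "w' \<in> C" "le w w'"
    then show "w' \<in> S" unfolding S_def using ltrans cf y PC by blast
  next
    fix w w' assume "w \<in> S" "w' \<in> S"
    then obtain g g' where g: "g \<in> P" "le (f g y) w" "w \<in> C" "g' \<in> P" "le (f g' y) w'" "w' \<in> C"
      unfolding S_def by blast
    have gC: "g \<in> C" "g' \<in> C" using g PC by auto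
    have "le (f (m g g') y) w"
      using ltrans[OF cf[OF cm[OF gC] y] cf[OF gC(1) y] g(3) fmono1[OF cm[OF gC] gC(1) y lm1[OF gC]] g(2)] .
    moreover have "le (f (m g g') y) w'"
      using ltrans[OF cf[OF cm[OF gC] y] cf[OF gC(2) y] g(6) fmono1[OF cm[OF gC] gC(2) y lm2[OF gC]] g(5)] .
    ultimately have "le (f (m g g') y) (m w w')" using glb[OF g(3,6) cf[OF cm[OF gC] y]] by blast
    then show "m w w' \<in> S" unfolding S_def using pfm[OF P g(1,4)] cm g by blast
  qed
  moreover have "S \<noteq> {}" unfolding S_def using pfu[OF P] cf[OF cu y] lrefl by blast
  moreover have "z \<in> {w\<in>C. le w x}" using cz lbot x by blast
  moreover have "S \<inter> {w\<in>C. le w x} = {}"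
  proof (rule ccontr)
    assume "\<not> ?thesis"
    then obtain w g where w: "w \<in> C" "le w x" "g \<in> P" "le (f g y) w" unfolding S_def by blast
    have gC: "g \<in> C" using w PC by blast
    have "le (f g y) x" using ltrans[OF cf[OF gC y] w(1) x w(4) w(2)] .
    then have "le g (r x y)" using res2 x y gC by blast
    then have "r x y \<in> P" using pfup[OF P w(3) cr[OF x y]] by blast
    then show False using xy by blast
  qed
  ultimately obtain H where H: "pf H" "S \<subseteq> H" "H \<inter> {w\<in>C. le w x} = {}"
    using pft downidl[OF x] by blast
  have xH: "x \<notin> H" using H x lrefl by blast
  have "\<forall>p\<in>P. f p y \<in> H" using H(2) unfolding S_def using cf y PC lrefl by blast
  then obtain G where "pf G" "y \<in> G" "\<forall>p\<in>P. \<forall>g\<in>G. f p g \<in> H"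
    using Lright[OF H(1) pffilt[OF P] pfu[OF P] y] by blast
  then show ?thesis using H xH by blast
qed


lemma pf_fus: "pf P \<Longrightarrow> a \<in> P \<Longrightarrow> b \<in> P \<Longrightarrow> f a b \<in> P"
proof -
  assume P: "pf P" and ab: "a \<in> P" "b \<in> P"
  have C': "a \<in> C" "b \<in> C" using ab pfC[OF P] by auto
  have "m a b \<in> P" using pfm[OF P ab] .
  moreover have "le (m a b) (f (m a b) (m a b))" using sq cm C' by blast
  moreover have "le (f (m a b) (m a b)) (f a b)"
    using ltrans[OF cf[OF cm[OF C'] cm[OF C']] cf[OF C'(1) cm[OF C']] cf[OF C']
      fmono1[OF cm[OF C'] C'(1) cm[OF C'] lm1[OF C']] fmono2[OF C'(1) cm[OF C'] C'(2) lm2[OF C']]] .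
  ultimately have "le (m a b) (f a b)" using ltrans[OF cm[OF C'] cf[OF cm[OF C'] cm[OF C']] cf[OF C']] by blast
  then show "f a b \<in> P" using pfup[OF P \<open>m a b \<in> P\<close> cf[OF C']] by blast
qed

lemma pf_ldiv: "pf P \<Longrightarrow> a \<in> P \<Longrightarrow> b \<in> C \<Longrightarrow> l a b \<in> P \<Longrightarrow> b \<in> P"
proof -
  assume P: "pf P" and ab: "a \<in> P" "b \<in> C" "l a b \<in> P"
  have aC: "a \<in> C" using ab pfC[OF P] by auto
  have "f a (l a b) \<in> P" using pf_fus[OF P ab(1,3)] .
  then show "b \<in> P" using pfup[OF P _ ab(2) resl[OF aC ab(2)]] by blast
qed

lemma pf_rdiv: "pf P \<Longrightarrow> a \<in> C \<Longrightarrow> b \<in> P \<Longrightarrow> r a b \<in> P \<Longrightarrow> a \<in> P"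
proof -
  assume P: "pf P" and ab: "a \<in> C" "b \<in> P" "r a b \<in> P"
  have bC: "b \<in> C" using ab pfC[OF P] by auto
  have "f (r a b) b \<in> P" using pf_fus[OF P ab(3,2)] .
  then show "a \<in> P" using pfup[OF P _ ab(1) resr[OF bC ab(1)]] by blast
qed

end

locale subL = brdgL C m j f l r le z u for C :: "'b set" and m j f l r le z u +
  fixes B :: "'a pstruct" and e :: "'a \<Rightarrow> 'b"
  assumes ecar: "a \<in> pcar B \<Longrightarrow> e a \<in> C"
    and einj: "inj_on e (pcar B)"
    and ebot: "e (pbot B) = z" and etop: "e (ptop B) = u"
    and bbot: "pbot B \<in> pcar B" and btop: "ptop B \<in> pcar B"
    and emeet: "(a, b) \<in> pdom (pmeet B) (pcar B) \<Longrightarrow> m (e a) (e b) = e (pval (pmeet B) a b) \<and> pval (pmeet B) a b \<in> pcar B"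
    and ejoin: "(a, b) \<in> pdom (pjoin B) (pcar B) \<Longrightarrow> j (e a) (e b) = e (pval (pjoin B) a b) \<and> pval (pjoin B) a b \<in> pcar B"
    and efus: "(a, b) \<in> pdom (pfus B) (pcar B) \<Longrightarrow> f (e a) (e b) = e (pval (pfus B) a b) \<and> pval (pfus B) a b \<in> pcar B"
    and eldiv: "(a, b) \<in> pdom (pldiv B) (pcar B) \<Longrightarrow> l (e a) (e b) = e (pval (pldiv B) a b) \<and> pval (pldiv B) a b \<in> pcar B"
    and erdiv: "(a, b) \<in> pdom (prdiv B) (pcar B) \<Longrightarrow> r (e a) (e b) = e (pval (prdiv B) a b) \<and> pval (prdiv B) a b \<in> pcar B"
    and ele: "a \<in> pcar B \<Longrightarrow> b \<in> pcar B \<Longrightarrow> ple B a b \<longleftrightarrow> le (e a) (e b)"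
begin

definition "pre P = {a \<in> pcar B. e a \<in> P}"

lemma pdomD: "(a, b) \<in> pdom op X \<Longrightarrow> a \<in> X \<and> b \<in> X" unfolding pdom_def by auto

lemma pbl: "partial_bounded_lattice B"
  unfolding partial_bounded_lattice_def Let_def
proof (intro conjI ballI impI; (elim conjE)?)
  fix x assume "x \<in> pcar B" then show "ple B x x" using ele[of x x] lrefl[OF ecar] by blast
next
  fix x y assume xy: "x \<in> pcar B" "y \<in> pcar B" "ple B x y" "ple B y x"
  then have "e x = e y" using ele[of x y] ele[of y x] lanti[OF ecar ecar] by blast
  then show "x = y" using einj xy(1,2) unfolding inj_on_def by blast
next
  fix x y w assume "x \<in> pcar B" "y \<in> pcar B" "w \<in> pcar B" "ple B x y" "ple B y w"
  then show "ple B x w" using ele[of x y] ele[of y w] ele[of x w] ltrans[OF ecar ecar ecar] by blast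
next
  fix x assume "x \<in> pcar B" then show "ple B (pbot B) x" using ele[OF bbot] lbot[OF ecar] ebot by simp
next
  fix x assume "x \<in> pcar B" then show "ple B x (ptop B)" using ele[OF _ btop] ltop[OF ecar] etop by simp
next
  fix p assume p: "p \<in> pdom (pmeet B) (pcar B)"
  obtain a b where ab: "p = (a, b)" by force
  have abB: "a \<in> pcar B" "b \<in> pcar B" using p unfolding ab pdom_def by auto
  have E: "m (e a) (e b) = e (pval (pmeet B) a b)" "pval (pmeet B) a b \<in> pcar B" using emeet[of a b] p unfolding ab by auto
  have aC: "e a \<in> C" "e b \<in> C" using ecar[OF abB(1)] ecar[OF abB(2)] by auto
  have 1: "ple B (pval (pmeet B) a b) a" using ele[OF E(2) abB(1)] lm1[OF aC] E(1) by simp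
  have 2: "ple B (pval (pmeet B) a b) b" using ele[OF E(2) abB(2)] lm2[OF aC] E(1) by simp
  have 3: "ple B x (pval (pmeet B) a b)" if "x \<in> pcar B" "ple B x a" "ple B x b" for x
    using that ele[OF that(1) E(2)] ele[OF that(1) abB(1)] ele[OF that(1) abB(2)] glb[OF aC ecar[OF that(1)]] E(1) by simp
  show "case p of (a, b) \<Rightarrow> ple B (pval (pmeet B) a b) a \<and> ple B (pval (pmeet B) a b) b \<and>
          (\<forall>x\<in>pcar B. ple B x a \<and> ple B x b \<longrightarrow> ple B x (pval (pmeet B) a b))"
    unfolding ab using 1 2 3 by simp
next
  fix p assume p: "p \<in> pdom (pjoin B) (pcar B)"
  obtain a b where ab: "p = (a, b)" by force
  have abB: "a \<in> pcar B" "b \<in> pcar B" using p unfolding ab pdom_def by auto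
  have E: "j (e a) (e b) = e (pval (pjoin B) a b)" "pval (pjoin B) a b \<in> pcar B" using ejoin[of a b] p unfolding ab by auto
  have aC: "e a \<in> C" "e b \<in> C" using ecar[OF abB(1)] ecar[OF abB(2)] by auto
  have 1: "ple B a (pval (pjoin B) a b)" using ele[OF abB(1) E(2)] lj1[OF aC] E(1) by simp
  have 2: "ple B b (pval (pjoin B) a b)" using ele[OF abB(2) E(2)] lj2[OF aC] E(1) by simp
  have 3: "ple B (pval (pjoin B) a b) x" if "x \<in> pcar B" "ple B a x" "ple B b x" for x
    using that ele[OF E(2) that(1)] ele[OF abB(1) that(1)] ele[OF abB(2) that(1)] lub[OF aC ecar[OF that(1)]] E(1) by simp
  show "case p of (a, b) \<Rightarrow> ple B a (pval (pjoin B) a b) \<and> ple B b (pval (pjoin B) a b) \<and>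
          (\<forall>x\<in>pcar B. ple B a x \<and> ple B b x \<longrightarrow> ple B (pval (pjoin B) a b) x)"
    unfolding ab using 1 2 3 by simp
qed

lemma ballpI: "(\<And>a b. (a, b) \<in> X \<Longrightarrow> P a b) \<Longrightarrow> \<forall>(a, b)\<in>X. P a b" by auto
lemma domc: "(a, b) \<in> pdom op (pcar B) \<Longrightarrow> a \<in> pcar B \<and> b \<in> pcar B" by (simp add: pdom_def)
lemma preI: "a \<in> pcar B \<Longrightarrow> e a \<in> P \<Longrightarrow> a \<in> pre P" unfolding pre_def by blast
lemma preD: "a \<in> pre P \<Longrightarrow> a \<in> pcar B \<and> e a \<in> P" unfolding pre_def by blast

lemma pre_prime: assumes P: "pf P" shows "prime_filter B (pre P)"
  unfolding prime_filter_def
proof (intro conjI)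
  show "pre P \<subseteq> pcar B" unfolding pre_def by blast
  show "ptop B \<in> pre P" using preI[OF btop] etop pfu[OF P] by simp
  show "pbot B \<notin> pre P"
  proof
    assume "pbot B \<in> pre P"
    then have "e (pbot B) \<in> P" using preD by blast
    then show False using ebot pfz[OF P] by simp
  qed
  show "\<forall>a\<in>pre P. \<forall>b\<in>pcar B. ple B a b \<longrightarrow> b \<in> pre P"
  proof (intro ballI impI)
    fix a b assume a: "a \<in> pre P" and b: "b \<in> pcar B" and ab: "ple B a b"
    have "a \<in> pcar B" "e a \<in> P" using preD[OF a] by auto
    then have "e b \<in> P" using pfup[OF P _ ecar[OF b]] ele[OF _ b] ab by blast
    then show "b \<in> pre P" using preI[OF b] by blast
  qed
  show "\<forall>(a, b)\<in>pdom (pmeet B) (pcar B). a \<in> pre P \<and> b \<in> pre P \<longrightarrow> pval (pmeet B) a b \<in> pre P"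
  proof (rule ballpI, rule impI)
    fix a b assume d: "(a, b) \<in> pdom (pmeet B) (pcar B)" and ab: "a \<in> pre P \<and> b \<in> pre P"
    have E: "m (e a) (e b) = e (pval (pmeet B) a b)" "pval (pmeet B) a b \<in> pcar B" using emeet[OF d] by auto
    have "m (e a) (e b) \<in> P" using pfm[OF P] preD ab by blast
    then show "pval (pmeet B) a b \<in> pre P" using preI[OF E(2)] E(1) by simp
  qed
  show "\<forall>(a, b)\<in>pdom (pjoin B) (pcar B). a \<notin> pre P \<and> b \<notin> pre P \<longrightarrow> pval (pjoin B) a b \<notin> pre P"
  proof (rule ballpI, rule impI)
    fix a b assume d: "(a, b) \<in> pdom (pjoin B) (pcar B)" and ab: "a \<notin> pre P \<and> b \<notin> pre P"
    have E: "j (e a) (e b) = e (pval (pjoin B) a b)" "pval (pjoin B) a b \<in> pcar B" using ejoin[OF d] by auto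
    have abB: "a \<in> pcar B" "b \<in> pcar B" using domc[OF d] by auto
    have "e a \<notin> P" "e b \<notin> P" using ab preI abB by blast+
    then have "j (e a) (e b) \<notin> P" using pfj[OF P ecar[OF abB(1)] ecar[OF abB(2)]] by blast
    then show "pval (pjoin B) a b \<notin> pre P" using preD E(1) by metis
  qed
qed

lemma pre_closed: assumes P: "pf P" shows "closed_filter B (pre P)"
  unfolding closed_filter_def
proof (intro conjI)
  show "\<forall>(a, b)\<in>pdom (pfus B) (pcar B). a \<in> pre P \<and> b \<in> pre P \<longrightarrow> pval (pfus B) a b \<in> pre P"
  proof (rule ballpI, rule impI)
    fix a b assume d: "(a, b) \<in> pdom (pfus B) (pcar B)" and ab: "a \<in> pre P \<and> b \<in> pre P"
    have E: "f (e a) (e b) = e (pval (pfus B) a b)" "pval (pfus B) a b \<in> pcar B" using efus[OF d] by auto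
    have "f (e a) (e b) \<in> P" using pf_fus[OF P] preD ab by blast
    then show "pval (pfus B) a b \<in> pre P" using preI[OF E(2)] E(1) by simp
  qed
  show "\<forall>(a, b)\<in>pdom (pldiv B) (pcar B). a \<in> pre P \<and> pval (pldiv B) a b \<in> pre P \<longrightarrow> b \<in> pre P"
  proof (rule ballpI, rule impI)
    fix a b assume d: "(a, b) \<in> pdom (pldiv B) (pcar B)" and ab: "a \<in> pre P \<and> pval (pldiv B) a b \<in> pre P"
    have E: "l (e a) (e b) = e (pval (pldiv B) a b)" "pval (pldiv B) a b \<in> pcar B" using eldiv[OF d] by auto
    have abB: "a \<in> pcar B" "b \<in> pcar B" using domc[OF d] by auto
    have "l (e a) (e b) \<in> P" using E(1) preD ab by metis
    then have "e b \<in> P" using pf_ldiv[OF P _ ecar[OF abB(2)]] preD ab by blast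
    then show "b \<in> pre P" using preI[OF abB(2)] by blast
  qed
  show "\<forall>(a, b)\<in>pdom (prdiv B) (pcar B). pval (prdiv B) a b \<in> pre P \<and> b \<in> pre P \<longrightarrow> a \<in> pre P"
  proof (rule ballpI, rule impI)
    fix a b assume d: "(a, b) \<in> pdom (prdiv B) (pcar B)" and ab: "pval (prdiv B) a b \<in> pre P \<and> b \<in> pre P"
    have E: "r (e a) (e b) = e (pval (prdiv B) a b)" "pval (prdiv B) a b \<in> pcar B" using erdiv[OF d] by auto
    have abB: "a \<in> pcar B" "b \<in> pcar B" using domc[OF d] by auto
    have "r (e a) (e b) \<in> P" using E(1) preD ab by metis
    then have "e a \<in> P" using pf_rdiv[OF P ecar[OF abB(1)]] preD ab by blast
    then show "a \<in> pre P" using preI[OF abB(1)] by blast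
  qed
qed

lemma pre_R:
  assumes P: "pf P" and Q: "pf Q" and H: "pf H" and R: "\<forall>p\<in>P. \<forall>q\<in>Q. f p q \<in> H"
  shows "relR B (pre P) (pre Q) (pre H)"
  unfolding relR_def
proof (intro conjI)
  show "\<forall>(a, b)\<in>pdom (pfus B) (pcar B). a \<in> pre P \<and> b \<in> pre Q \<longrightarrow> pval (pfus B) a b \<in> pre H"
  proof (rule ballpI, rule impI)
    fix a b assume d: "(a, b) \<in> pdom (pfus B) (pcar B)" and ab: "a \<in> pre P \<and> b \<in> pre Q"
    have E: "f (e a) (e b) = e (pval (pfus B) a b)" "pval (pfus B) a b \<in> pcar B" using efus[OF d] by auto
    have "f (e a) (e b) \<in> H" using R preD ab by blast
    then show "pval (pfus B) a b \<in> pre H" using preI[OF E(2)] E(1) by simp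
  qed
  show "\<forall>(a, b)\<in>pdom (pldiv B) (pcar B). a \<in> pre P \<and> pval (pldiv B) a b \<in> pre Q \<longrightarrow> b \<in> pre H"
  proof (rule ballpI, rule impI)
    fix a b assume d: "(a, b) \<in> pdom (pldiv B) (pcar B)" and ab: "a \<in> pre P \<and> pval (pldiv B) a b \<in> pre Q"
    have E: "l (e a) (e b) = e (pval (pldiv B) a b)" "pval (pldiv B) a b \<in> pcar B" using eldiv[OF d] by auto
    have abB: "a \<in> pcar B" "b \<in> pcar B" using domc[OF d] by auto
    have "l (e a) (e b) \<in> Q" using E(1) preD ab by metis
    moreover have "e a \<in> P" using preD ab by blast
    ultimately have "f (e a) (l (e a) (e b)) \<in> H" using R by blast
    then have "e b \<in> H" using pfup[OF H _ ecar[OF abB(2)] resl[OF ecar[OF abB(1)] ecar[OF abB(2)]]] by blast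
    then show "b \<in> pre H" using preI[OF abB(2)] by blast
  qed
  show "\<forall>(b, a)\<in>pdom (prdiv B) (pcar B). pval (prdiv B) b a \<in> pre P \<and> a \<in> pre Q \<longrightarrow> b \<in> pre H"
  proof (rule ballpI, rule impI)
    fix b a assume d: "(b, a) \<in> pdom (prdiv B) (pcar B)" and ab: "pval (prdiv B) b a \<in> pre P \<and> a \<in> pre Q"
    have E: "r (e b) (e a) = e (pval (prdiv B) b a)" "pval (prdiv B) b a \<in> pcar B" using erdiv[OF d] by auto
    have abB: "b \<in> pcar B" "a \<in> pcar B" using domc[OF d] by auto
    have "r (e b) (e a) \<in> P" using E(1) preD ab by metis
    moreover have "e a \<in> Q" using preD ab by blast
    ultimately have "f (r (e b) (e a)) (e a) \<in> H" using R by blast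
    then have "e b \<in> H" using pfup[OF H _ ecar[OF abB(1)] resr[OF ecar[OF abB(2)] ecar[OF abB(1)]]] by blast
    then show "b \<in> pre H" using preI[OF abB(1)] by blast
  qed
qed


lemma rep: "representable_sq B"
proof -
  define FF where "FF = {pre P | P. pf P}"
  have FFI: "pf P \<Longrightarrow> pre P \<in> FF" for P unfolding FF_def by blast
  have FFE: "x \<in> FF \<Longrightarrow> \<exists>P. pf P \<and> x = pre P" for x unfolding FF_def by blast
  have 1: "\<forall>x\<in>FF. prime_filter B x \<and> closed_filter B x"
    using FFE pre_prime pre_closed by blast
  have 2: "condD B FF" unfolding condD_def
  proof (intro ballI impI)
    fix a b assume a: "a \<in> pcar B" and b: "b \<in> pcar B" and nab: "\<not> ple B a b"
    have aC: "e a \<in> C" and bC: "e b \<in> C" using ecar a b by auto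
    have n: "\<not> le (e a) (e b)" using nab ele[OF a b] by blast
    have "{y\<in>C. le (e a) y} \<inter> {y\<in>C. le y (e b)} = {}"
    proof (rule ccontr)
      assume "\<not> ?thesis"
      then obtain y where "y \<in> C" "le (e a) y" "le y (e b)" by blast
      then show False using ltrans[OF aC _ bC] n by blast
    qed
    moreover have "{y\<in>C. le (e a) y} \<noteq> {}" using aC lrefl by blast
    moreover have "z \<in> {y\<in>C. le y (e b)}" using cz lbot[OF bC] by blast
    ultimately obtain P where P: "pf P" "{y\<in>C. le (e a) y} \<subseteq> P" "P \<inter> {y\<in>C. le y (e b)} = {}"
      using pft[OF upfilt[OF aC] _ downidl[OF bC]] by blast
    have "e a \<in> P" using P(2) aC lrefl[OF aC] by blast
    moreover have "e b \<notin> P" using P(3) bC lrefl[OF bC] by blast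
    ultimately have "a \<in> pre P" "b \<notin> pre P" using preI[OF a] preD by blast+
    then show "\<exists>x\<in>FF. a \<in> x \<and> b \<notin> x" using FFI[OF P(1)] by blast
  qed
  have 3: "condM_fus B FF" unfolding condM_fus_def
  proof (rule ballI, rule ballpI, rule impI)
    fix h a b assume h: "h \<in> FF" and d: "(a, b) \<in> pdom (pfus B) (pcar B)" and c: "pval (pfus B) a b \<in> h"
    obtain H where H: "pf H" "h = pre H" using FFE[OF h] by blast
    have E: "f (e a) (e b) = e (pval (pfus B) a b)" using efus[OF d] by auto
    have abB: "a \<in> pcar B" "b \<in> pcar B" using domc[OF d] by auto
    have "f (e a) (e b) \<in> H" using c H(2) preD E by metis
    then obtain P Q where PQ: "pf P" "pf Q" "e a \<in> P" "e b \<in> Q" "\<forall>p\<in>P. \<forall>q\<in>Q. f p q \<in> H"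
      using Mfus[OF H(1) ecar[OF abB(1)] ecar[OF abB(2)]] by blast
    have "relR B (pre P) (pre Q) h" using pre_R[OF PQ(1,2) H(1) PQ(5)] H(2) by simp
    moreover have "a \<in> pre P" "b \<in> pre Q" using preI abB PQ by blast+
    ultimately show "\<exists>f\<in>FF. \<exists>g\<in>FF. a \<in> f \<and> b \<in> g \<and> relR B f g h"
      using FFI[OF PQ(1)] FFI[OF PQ(2)] by blast
  qed
  have 4: "condM_ldiv B FF" unfolding condM_ldiv_def
  proof (rule ballI, rule ballpI, rule impI)
    fix g a b assume g: "g \<in> FF" and d: "(a, b) \<in> pdom (pldiv B) (pcar B)" and c: "pval (pldiv B) a b \<notin> g"
    obtain G where G: "pf G" "g = pre G" using FFE[OF g] by blast
    have E: "l (e a) (e b) = e (pval (pldiv B) a b)" "pval (pldiv B) a b \<in> pcar B" using eldiv[OF d] by auto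
    have abB: "a \<in> pcar B" "b \<in> pcar B" using domc[OF d] by auto
    have "l (e a) (e b) \<notin> G" using c G(2) preI[OF E(2)] E(1) by metis
    then obtain P Q where PQ: "pf P" "pf Q" "e a \<in> P" "e b \<notin> Q" "\<forall>p\<in>P. \<forall>q\<in>G. f p q \<in> Q"
      using Mldiv[OF G(1) ecar[OF abB(1)] ecar[OF abB(2)]] by blast
    have "relR B (pre P) g (pre Q)" using pre_R[OF PQ(1) G(1) PQ(2) PQ(5)] G(2) by simp
    moreover have "a \<in> pre P" using preI abB PQ by blast
    moreover have "b \<notin> pre Q" using preD PQ by blast
    ultimately show "\<exists>f\<in>FF. \<exists>h\<in>FF. a \<in> f \<and> b \<notin> h \<and> relR B f g h"
      using FFI[OF PQ(1)] FFI[OF PQ(2)] by blast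
  qed
  have 5: "condM_rdiv B FF" unfolding condM_rdiv_def
  proof (rule ballI, rule ballpI, rule impI)
    fix h a b assume h: "h \<in> FF" and d: "(a, b) \<in> pdom (prdiv B) (pcar B)" and c: "pval (prdiv B) a b \<notin> h"
    obtain P where P: "pf P" "h = pre P" using FFE[OF h] by blast
    have E: "r (e a) (e b) = e (pval (prdiv B) a b)" "pval (prdiv B) a b \<in> pcar B" using erdiv[OF d] by auto
    have abB: "a \<in> pcar B" "b \<in> pcar B" using domc[OF d] by auto
    have "r (e a) (e b) \<notin> P" using c P(2) preI[OF E(2)] E(1) by metis
    then obtain G H where GH: "pf G" "pf H" "e b \<in> G" "e a \<notin> H" "\<forall>p\<in>P. \<forall>q\<in>G. f p q \<in> H"
      using Mrdiv[OF P(1) ecar[OF abB(1)] ecar[OF abB(2)]] by blast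
    have "relR B h (pre G) (pre H)" using pre_R[OF P(1) GH(1) GH(2) GH(5)] P(2) by simp
    moreover have "b \<in> pre G" using preI abB GH by blast
    moreover have "a \<notin> pre H" using preD GH by blast
    ultimately show "\<exists>g\<in>FF. \<exists>h'\<in>FF. b \<in> g \<and> a \<notin> h' \<and> relR B h g h'"
      using FFI[OF GH(1)] FFI[OF GH(2)] by blast
  qed
  show ?thesis unfolding representable_sq_def using pbl 1 2 3 4 5 by blast
qed

end

lemma pvalC:
  assumes "\<forall>a\<in>X. \<forall>b\<in>X. \<forall>c. op a b = Some c \<longrightarrow> c \<in> X" "\<forall>a\<in>X. \<forall>b\<in>X. op a b \<noteq> None" "a \<in> X" "b \<in> X"
  shows "pval op a b \<in> X"
  using assms unfolding pval_def by fastforce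

lemma op_tr:
  assumes "(a, b) \<in> pdom opB X" "\<forall>c. opB a b = Some c \<longrightarrow> opA (e a) (e b) = Some (e c)"
    "\<forall>a\<in>X. \<forall>b\<in>X. \<forall>c. opB a b = Some c \<longrightarrow> c \<in> X"
  shows "pval opA (e a) (e b) = e (pval opB a b) \<and> pval opB a b \<in> X"
  using assms unfolding pdom_def pval_def by fastforce

lemma brdgL_of:
  assumes "square_increasing_brdg A"
  shows "brdgL (pcar A) (pval (pmeet A)) (pval (pjoin A)) (pval (pfus A)) (pval (pldiv A)) (pval (prdiv A)) (ple A) (pbot A) (ptop A)"
proof -
  have sq: "\<forall>x\<in>pcar A. ple A x (pval (pfus A) x x)"
    using assms unfolding square_increasing_brdg_def by (rule conjunct2)
  have br: "is_brdg A"
    using assms unfolding square_increasing_brdg_def by (rule conjunct1)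
  have ps: "partial_structure A" using br unfolding is_brdg_def by (rule conjunct1)
  have tot: "\<forall>op \<in> set (pops A). \<forall>a \<in> pcar A. \<forall>b \<in> pcar A. op a b \<noteq> None"
    using br unfolding is_brdg_def by (rule conjunct1[OF conjunct2])
  have cl: "\<forall>op \<in> set (pops A). \<forall>a \<in> pcar A. \<forall>b \<in> pcar A. \<forall>c. op a b = Some c \<longrightarrow> c \<in> pcar A"
    using ps unfolding partial_structure_def by (rule conjunct1[OF conjunct2])
  have bt: "pbot A \<in> pcar A" "ptop A \<in> pcar A"
    using ps unfolding partial_structure_def by (rule conjunct1[OF conjunct2[OF conjunct2]], rule conjunct1[OF conjunct2[OF conjunct2[OF conjunct2]]])
  have ops: "pmeet A \<in> set (pops A)" "pjoin A \<in> set (pops A)" "pfus A \<in> set (pops A)"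
    "pldiv A \<in> set (pops A)" "prdiv A \<in> set (pops A)" by (simp_all add: pops_def)
  have C: "\<And>op a b. op \<in> set (pops A) \<Longrightarrow> a \<in> pcar A \<Longrightarrow> b \<in> pcar A \<Longrightarrow> pval op a b \<in> pcar A"
    by (rule pvalC[OF bspec[OF cl] bspec[OF tot]])
  have ax: "(\<forall>x\<in>pcar A. \<forall>y\<in>pcar A. pval (pmeet A) x y = pval (pmeet A) y x \<and> pval (pjoin A) x y = pval (pjoin A) y x)
      \<and> (\<forall>x\<in>pcar A. \<forall>y\<in>pcar A. \<forall>w\<in>pcar A. pval (pmeet A) x (pval (pmeet A) y w) = pval (pmeet A) (pval (pmeet A) x y) w \<and> pval (pjoin A) x (pval (pjoin A) y w) = pval (pjoin A) (pval (pjoin A) x y) w)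
      \<and> (\<forall>x\<in>pcar A. \<forall>y\<in>pcar A. pval (pmeet A) x (pval (pjoin A) x y) = x \<and> pval (pjoin A) x (pval (pmeet A) x y) = x)
      \<and> (\<forall>x\<in>pcar A. \<forall>y\<in>pcar A. \<forall>w\<in>pcar A. pval (pmeet A) x (pval (pjoin A) y w) = pval (pjoin A) (pval (pmeet A) x y) (pval (pmeet A) x w))
      \<and> (\<forall>x\<in>pcar A. pval (pjoin A) x (pbot A) = x \<and> pval (pmeet A) x (ptop A) = x)
      \<and> (\<forall>x\<in>pcar A. \<forall>y\<in>pcar A. ple A x y \<longleftrightarrow> pval (pmeet A) x y = x)
      \<and> (\<forall>x\<in>pcar A. \<forall>y\<in>pcar A. \<forall>w\<in>pcar A.
            (ple A (pval (pfus A) x y) w \<longleftrightarrow> ple A y (pval (pldiv A) x w)) \<and> (ple A (pval (pfus A) x y) w \<longleftrightarrow> ple A x (pval (prdiv A) w y)))"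
    using conjunct2[OF conjunct2[OF br[unfolded is_brdg_def]]] unfolding Let_def .
  note a1 = conjunct1[OF ax] and a2 = conjunct1[OF conjunct2[OF ax]]
    and a3 = conjunct1[OF conjunct2[OF conjunct2[OF ax]]]
    and a4 = conjunct1[OF conjunct2[OF conjunct2[OF conjunct2[OF ax]]]]
    and a5 = conjunct1[OF conjunct2[OF conjunct2[OF conjunct2[OF conjunct2[OF ax]]]]]
    and a6 = conjunct1[OF conjunct2[OF conjunct2[OF conjunct2[OF conjunct2[OF conjunct2[OF ax]]]]]]
    and a7 = conjunct2[OF conjunct2[OF conjunct2[OF conjunct2[OF conjunct2[OF conjunct2[OF ax]]]]]]
  show ?thesis
  proof (unfold_locales, goal_cases)
    case 1 then show ?case using C[OF ops(1)] by blast
  next case 2 then show ?case using C[OF ops(2)] by blast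
  next case 3 then show ?case using C[OF ops(3)] by blast
  next case 4 then show ?case using C[OF ops(4)] by blast
  next case 5 then show ?case using C[OF ops(5)] by blast
  next case 6 then show ?case using bt by blast
  next case 7 then show ?case using bt by blast
  next case 8 then show ?case using a1 by blast
  next case 9 then show ?case using a1 by blast
  next case 10 then show ?case using a2 by blast
  next case 11 then show ?case using a2 by blast
  next case 12 then show ?case using a3 by blast
  next case 13 then show ?case using a3 by blast
  next case 14 then show ?case using a4 by blast
  next case 15 then show ?case using a5 by blast
  next case 16 then show ?case using a5 by blast
  next case 17 then show ?case using a6 by blast
  next case 18 then show ?case using a7 by blast
  next case 19 then show ?case using a7 by blast
  next case 20 then show ?case using sq by blast
  qed
qed


lemma dir1:
  assumes PB: "partial_structure B" and SA: "square_increasing_brdg A" and SV: "partial_substructure_via B A e"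
  shows "representable_sq B"
proof -
  note sv = SV[unfolded partial_substructure_via_def]
  note inj = conjunct1[OF sv] and img = conjunct1[OF conjunct2[OF sv]]
    and eb = conjunct1[OF conjunct2[OF conjunct2[OF sv]]]
    and et = conjunct1[OF conjunct2[OF conjunct2[OF conjunct2[OF sv]]]]
    and eo = conjunct1[OF conjunct2[OF conjunct2[OF conjunct2[OF conjunct2[OF sv]]]]]
    and el = conjunct2[OF conjunct2[OF conjunct2[OF conjunct2[OF conjunct2[OF sv]]]]]
  note pb = PB[unfolded partial_structure_def]
  note clB = conjunct1[OF conjunct2[OF pb]]
    and bb = conjunct1[OF conjunct2[OF conjunct2[OF pb]]]
    and bt = conjunct1[OF conjunct2[OF conjunct2[OF conjunct2[OF pb]]]]
  have ops: "pmeet B \<in> set (pops B)" "pjoin B \<in> set (pops B)" "pfus B \<in> set (pops B)"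
    "pldiv B \<in> set (pops B)" "prdiv B \<in> set (pops B)" by (simp_all add: pops_def)
  have eo': "\<And>a b c. a \<in> pcar B \<Longrightarrow> b \<in> pcar B \<Longrightarrow>
          (pmeet B a b = Some c \<longrightarrow> pmeet A (e a) (e b) = Some (e c))
        \<and> (pjoin B a b = Some c \<longrightarrow> pjoin A (e a) (e b) = Some (e c))
        \<and> (pfus B a b = Some c \<longrightarrow> pfus A (e a) (e b) = Some (e c))
        \<and> (pldiv B a b = Some c \<longrightarrow> pldiv A (e a) (e b) = Some (e c))
        \<and> (prdiv B a b = Some c \<longrightarrow> prdiv A (e a) (e b) = Some (e c))"
    using eo by blast
  have dc: "\<And>a b op. (a, b) \<in> pdom op (pcar B) \<Longrightarrow> a \<in> pcar B \<and> b \<in> pcar B"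
    unfolding pdom_def by blast
  interpret S: subL "pcar A" "pval (pmeet A)" "pval (pjoin A)" "pval (pfus A)" "pval (pldiv A)"
      "pval (prdiv A)" "ple A" "pbot A" "ptop A" B e
  proof (rule subL.intro[OF brdgL_of[OF SA]], rule subL_axioms.intro, goal_cases)
    case (1 a) then show ?case using img by blast
  next case 2 show ?case by (rule inj)
  next case 3 show ?case by (rule eb)
  next case 4 show ?case by (rule et)
  next case 5 show ?case by (rule bb)
  next case 6 show ?case by (rule bt)
  next case (7 a b) then show ?case
      using op_tr[OF 7, of "pmeet A" e, OF _ bspec[OF clB ops(1)]] eo'[OF conjunct1[OF dc[OF 7]] conjunct2[OF dc[OF 7]]] by blast
  next case (8 a b) then show ?case
      using op_tr[OF 8, of "pjoin A" e, OF _ bspec[OF clB ops(2)]] eo'[OF conjunct1[OF dc[OF 8]] conjunct2[OF dc[OF 8]]] by blast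
  next case (9 a b) then show ?case
      using op_tr[OF 9, of "pfus A" e, OF _ bspec[OF clB ops(3)]] eo'[OF conjunct1[OF dc[OF 9]] conjunct2[OF dc[OF 9]]] by blast
  next case (10 a b) then show ?case
      using op_tr[OF 10, of "pldiv A" e, OF _ bspec[OF clB ops(4)]] eo'[OF conjunct1[OF dc[OF 10]] conjunct2[OF dc[OF 10]]] by blast
  next case (11 a b) then show ?case
      using op_tr[OF 11, of "prdiv A" e, OF _ bspec[OF clB ops(5)]] eo'[OF conjunct1[OF dc[OF 11]] conjunct2[OF dc[OF 11]]] by blast
  next case (12 a b) then show ?case using el by blast
  qed
  show ?thesis by (rule S.rep)
qed



definition cfus :: "'a pstruct \<Rightarrow> 'a set set \<Rightarrow> 'a set set \<Rightarrow> 'a set set \<Rightarrow> 'a set set" where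
  "cfus B F U V = {h\<in>F. \<exists>f\<in>U. \<exists>g\<in>V. relR B f g h}"
definition cldiv :: "'a pstruct \<Rightarrow> 'a set set \<Rightarrow> 'a set set \<Rightarrow> 'a set set \<Rightarrow> 'a set set" where
  "cldiv B F U W = {g\<in>F. \<forall>f\<in>U. \<forall>h\<in>F. relR B f g h \<longrightarrow> h \<in> W}"
definition crdiv :: "'a pstruct \<Rightarrow> 'a set set \<Rightarrow> 'a set set \<Rightarrow> 'a set set \<Rightarrow> 'a set set" where
  "crdiv B F W V = {f\<in>F. \<forall>g\<in>V. \<forall>h\<in>F. relR B f g h \<longrightarrow> h \<in> W}"
definition cA :: "'a pstruct \<Rightarrow> 'a set set \<Rightarrow> 'a set set pstruct" where
  "cA B F = \<lparr>pcar = Pow F, pmeet = \<lambda>U V. Some (U \<inter> V), pjoin = \<lambda>U V. Some (U \<union> V),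
     pfus = \<lambda>U V. Some (cfus B F U V), pldiv = \<lambda>U V. Some (cldiv B F U V),
     prdiv = \<lambda>U V. Some (crdiv B F U V), pbot = {}, ptop = F, ple = \<lambda>U V. U \<subseteq> V \<and> V \<subseteq> F\<rparr>"
definition emb :: "'a set set \<Rightarrow> 'a \<Rightarrow> 'a set set" where
  "emb F a = {f\<in>F. a \<in> f}"

lemma cl_R: "closed_filter B f \<Longrightarrow> relR B f f f"
  unfolding closed_filter_def relR_def by simp

lemma cA_sq:
  assumes FF: "\<forall>f\<in>F. closed_filter B f"
  shows "square_increasing_brdg (cA B F)"
proof -
  have ps: "partial_structure (cA B F)"
    unfolding partial_structure_def pops_def cA_def cfus_def cldiv_def crdiv_def by auto
  have tot: "\<forall>op \<in> set (pops (cA B F)). \<forall>a \<in> pcar (cA B F). \<forall>b \<in> pcar (cA B F). op a b \<noteq> None"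
    unfolding pops_def cA_def by auto
  have r1: "cfus B F x y \<subseteq> w \<longleftrightarrow> y \<subseteq> cldiv B F x w" if "y \<subseteq> F" for x y w
  proof
    assume a: "cfus B F x y \<subseteq> w"
    show "y \<subseteq> cldiv B F x w"
    proof
      fix g assume g: "g \<in> y"
      have "\<forall>f\<in>x. \<forall>h\<in>F. relR B f g h \<longrightarrow> h \<in> w"
      proof (intro ballI impI)
        fix f h assume "f \<in> x" "h \<in> F" "relR B f g h"
        then have "h \<in> cfus B F x y" unfolding cfus_def using g by blast
        then show "h \<in> w" using a by blast
      qed
      then show "g \<in> cldiv B F x w" unfolding cldiv_def using g that by blast
    qed
  next
    assume a: "y \<subseteq> cldiv B F x w"
    show "cfus B F x y \<subseteq> w"
    proof
      fix h assume "h \<in> cfus B F x y"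
      then obtain f g where "h \<in> F" "f \<in> x" "g \<in> y" "relR B f g h" unfolding cfus_def by blast
      moreover then have "g \<in> cldiv B F x w" using a by blast
      ultimately show "h \<in> w" unfolding cldiv_def by blast
    qed
  qed
  have r2: "cfus B F x y \<subseteq> w \<longleftrightarrow> x \<subseteq> crdiv B F w y" if "x \<subseteq> F" for x y w
  proof
    assume a: "cfus B F x y \<subseteq> w"
    show "x \<subseteq> crdiv B F w y"
    proof
      fix f assume f: "f \<in> x"
      have "\<forall>g\<in>y. \<forall>h\<in>F. relR B f g h \<longrightarrow> h \<in> w"
      proof (intro ballI impI)
        fix g h assume "g \<in> y" "h \<in> F" "relR B f g h"
        then have "h \<in> cfus B F x y" unfolding cfus_def using f by blast
        then show "h \<in> w" using a by blast
      qed
      then show "f \<in> crdiv B F w y" unfolding crdiv_def using f that by blast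
    qed
  next
    assume a: "x \<subseteq> crdiv B F w y"
    show "cfus B F x y \<subseteq> w"
    proof
      fix h assume "h \<in> cfus B F x y"
      then obtain f g where "h \<in> F" "f \<in> x" "g \<in> y" "relR B f g h" unfolding cfus_def by blast
      moreover then have "f \<in> crdiv B F w y" using a by blast
      ultimately show "h \<in> w" unfolding crdiv_def by blast
    qed
  qed
  have sub: "cldiv B F x w \<subseteq> F" "crdiv B F w y \<subseteq> F" for x y w
    unfolding cldiv_def crdiv_def by auto
  have res: "\<forall>x\<in>Pow F. \<forall>y\<in>Pow F. \<forall>w\<in>Pow F.
     (cfus B F x y \<subseteq> w \<and> w \<subseteq> F \<longleftrightarrow> y \<subseteq> cldiv B F x w \<and> cldiv B F x w \<subseteq> F) \<and>
     (cfus B F x y \<subseteq> w \<and> w \<subseteq> F \<longleftrightarrow> x \<subseteq> crdiv B F w y \<and> crdiv B F w y \<subseteq> F)"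
  proof (intro ballI)
    fix x y w assume "x \<in> Pow F" "y \<in> Pow F" "w \<in> Pow F"
    then show "(cfus B F x y \<subseteq> w \<and> w \<subseteq> F \<longleftrightarrow> y \<subseteq> cldiv B F x w \<and> cldiv B F x w \<subseteq> F) \<and>
     (cfus B F x y \<subseteq> w \<and> w \<subseteq> F \<longleftrightarrow> x \<subseteq> crdiv B F w y \<and> crdiv B F w y \<subseteq> F)"
      using r1[of y x w] r2[of x y w] sub(1)[of x w] sub(2)[of w y] by blast
  qed
  have lat: "is_brdg (cA B F)"
    unfolding is_brdg_def Let_def
  proof (intro conjI)
    show "partial_structure (cA B F)" by (rule ps)
    show "\<forall>op \<in> set (pops (cA B F)). \<forall>a \<in> pcar (cA B F). \<forall>b \<in> pcar (cA B F). op a b \<noteq> None" by (rule tot)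
    have "pcar (cA B F) = Pow F" "\<And>x y. pval (pfus (cA B F)) x y = cfus B F x y"
      "\<And>x y. pval (pldiv (cA B F)) x y = cldiv B F x y" "\<And>x y. pval (prdiv (cA B F)) x y = crdiv B F x y"
      "\<And>x y. ple (cA B F) x y = (x \<subseteq> y \<and> y \<subseteq> F)"
      by (simp_all add: cA_def pval_def)
    then show "\<forall>x\<in>pcar (cA B F). \<forall>y\<in>pcar (cA B F). \<forall>w\<in>pcar (cA B F).
              ple (cA B F) (pval (pfus (cA B F)) x y) w = ple (cA B F) y (pval (pldiv (cA B F)) x w) \<and>
              ple (cA B F) (pval (pfus (cA B F)) x y) w = ple (cA B F) x (pval (prdiv (cA B F)) w y)"
      using res by (simp only:)
  qed (simp_all add: cA_def pval_def Int_Un_distrib; blast)+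
  have "\<forall>x\<in>Pow F. x \<subseteq> cfus B F x x \<and> cfus B F x x \<subseteq> F"
    unfolding cfus_def using FF cl_R by blast
  then show ?thesis unfolding square_increasing_brdg_def using lat by (simp add: cA_def pval_def)
qed


lemma cA_emb:
  assumes PS: "partial_structure B" and PBL: "partial_bounded_lattice B"
    and FF: "\<forall>f\<in>F. prime_filter B f \<and> closed_filter B f"
    and D: "condD B F" and Mf: "condM_fus B F" and Ml: "condM_ldiv B F" and Mr: "condM_rdiv B F"
  shows "partial_substructure_via B (cA B F) (emb F)"
proof -
  note pbl = PBL[unfolded partial_bounded_lattice_def Let_def]
  have anti0: "\<forall>x\<in>pcar B. \<forall>y\<in>pcar B. ple B x y \<and> ple B y x \<longrightarrow> x = y"
    using pbl by (elim conjE)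
  have anti: "\<And>x y. x \<in> pcar B \<Longrightarrow> y \<in> pcar B \<Longrightarrow> ple B x y \<Longrightarrow> ple B y x \<Longrightarrow> x = y"
    using anti0 by blast
  have mlb: "\<And>a b. (a, b) \<in> pdom (pmeet B) (pcar B) \<Longrightarrow> ple B (pval (pmeet B) a b) a \<and> ple B (pval (pmeet B) a b) b"
  proof -
    fix a b assume d: "(a, b) \<in> pdom (pmeet B) (pcar B)"
    have "\<forall>(a, b) \<in> pdom (pmeet B) (pcar B). ple B (pval (pmeet B) a b) a \<and> ple B (pval (pmeet B) a b) b \<and> (\<forall>x\<in>pcar B. ple B x a \<and> ple B x b \<longrightarrow> ple B x (pval (pmeet B) a b))"
      using pbl by (elim conjE)
    then show "ple B (pval (pmeet B) a b) a \<and> ple B (pval (pmeet B) a b) b" using d by blast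
  qed
  have jub: "\<And>a b. (a, b) \<in> pdom (pjoin B) (pcar B) \<Longrightarrow> ple B a (pval (pjoin B) a b) \<and> ple B b (pval (pjoin B) a b)"
  proof -
    fix a b assume d: "(a, b) \<in> pdom (pjoin B) (pcar B)"
    have "\<forall>(a, b) \<in> pdom (pjoin B) (pcar B). ple B a (pval (pjoin B) a b) \<and> ple B b (pval (pjoin B) a b) \<and> (\<forall>x\<in>pcar B. ple B a x \<and> ple B b x \<longrightarrow> ple B (pval (pjoin B) a b) x)"
      using pbl by (elim conjE)
    then show "ple B a (pval (pjoin B) a b) \<and> ple B b (pval (pjoin B) a b)" using d by blast
  qed
  have PF: "\<And>f. f \<in> F \<Longrightarrow> prime_filter B f" using FF by blast
  have up: "\<And>f x y. f \<in> F \<Longrightarrow> x \<in> f \<Longrightarrow> y \<in> pcar B \<Longrightarrow> ple B x y \<Longrightarrow> y \<in> f"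
  proof -
    fix f x y assume "f \<in> F" "x \<in> f" "y \<in> pcar B" "ple B x y"
    moreover have "\<forall>a \<in> f. \<forall>b \<in> pcar B. ple B a b \<longrightarrow> b \<in> f"
      using PF[OF \<open>f \<in> F\<close>] unfolding prime_filter_def by (elim conjE)
    ultimately show "y \<in> f" by blast
  qed
  have fm: "\<And>f a b. f \<in> F \<Longrightarrow> (a, b) \<in> pdom (pmeet B) (pcar B) \<Longrightarrow> a \<in> f \<Longrightarrow> b \<in> f \<Longrightarrow> pval (pmeet B) a b \<in> f"
  proof -
    fix f a b assume "f \<in> F" "(a, b) \<in> pdom (pmeet B) (pcar B)" "a \<in> f" "b \<in> f"
    moreover have "\<forall>(a, b) \<in> pdom (pmeet B) (pcar B). a \<in> f \<and> b \<in> f \<longrightarrow> pval (pmeet B) a b \<in> f"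
      using PF[OF \<open>f \<in> F\<close>] unfolding prime_filter_def by (elim conjE)
    ultimately show "pval (pmeet B) a b \<in> f" by blast
  qed
  have fj: "\<And>f a b. f \<in> F \<Longrightarrow> (a, b) \<in> pdom (pjoin B) (pcar B) \<Longrightarrow> a \<notin> f \<Longrightarrow> b \<notin> f \<Longrightarrow> pval (pjoin B) a b \<notin> f"
  proof -
    fix f a b assume "f \<in> F" "(a, b) \<in> pdom (pjoin B) (pcar B)" "a \<notin> f" "b \<notin> f"
    moreover have "\<forall>(a, b) \<in> pdom (pjoin B) (pcar B). a \<notin> f \<and> b \<notin> f \<longrightarrow> pval (pjoin B) a b \<notin> f"
      using PF[OF \<open>f \<in> F\<close>] unfolding prime_filter_def by (elim conjE)
    ultimately show "pval (pjoin B) a b \<notin> f" by blast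
  qed
  have fb: "\<And>f. f \<in> F \<Longrightarrow> pbot B \<notin> f \<and> ptop B \<in> f \<and> f \<subseteq> pcar B"
  proof -
    fix f assume "f \<in> F"
    then have "f \<subseteq> pcar B \<and> ptop B \<in> f \<and> pbot B \<notin> f" using PF[OF \<open>f \<in> F\<close>] unfolding prime_filter_def by (elim conjE) (intro conjI)
    then show "pbot B \<notin> f \<and> ptop B \<in> f \<and> f \<subseteq> pcar B" by blast
  qed
  have DD: "\<And>a b. a \<in> pcar B \<Longrightarrow> b \<in> pcar B \<Longrightarrow> \<not> ple B a b \<Longrightarrow> \<exists>f\<in>F. a \<in> f \<and> b \<notin> f"
    using D unfolding condD_def by blast
  have le_iff: "ple B a b \<longleftrightarrow> emb F a \<subseteq> emb F b" if "a \<in> pcar B" "b \<in> pcar B" for a b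
  proof
    assume "ple B a b" then show "emb F a \<subseteq> emb F b" unfolding emb_def using up that by blast
  next
    assume "emb F a \<subseteq> emb F b" then show "ple B a b" unfolding emb_def using DD[OF that] by blast
  qed
  have clB0: "\<forall>op \<in> set (pops B). \<forall>a \<in> pcar B. \<forall>b \<in> pcar B. \<forall>c. op a b = Some c \<longrightarrow> c \<in> pcar B"
    by (rule conjunct1[OF conjunct2[OF PS[unfolded partial_structure_def]]])
  have clB: "\<And>a b c. a \<in> pcar B \<Longrightarrow> b \<in> pcar B \<Longrightarrow> (pmeet B a b = Some c \<longrightarrow> c \<in> pcar B) \<and> (pjoin B a b = Some c \<longrightarrow> c \<in> pcar B)"
  proof -
    fix a b c assume "a \<in> pcar B" "b \<in> pcar B"
    moreover have "pmeet B \<in> set (pops B)" "pjoin B \<in> set (pops B)" by (simp_all add: pops_def)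
    ultimately show "(pmeet B a b = Some c \<longrightarrow> c \<in> pcar B) \<and> (pjoin B a b = Some c \<longrightarrow> c \<in> pcar B)"
      using clB0 by blast
  qed
  have dom: "\<And>op a b c. a \<in> pcar B \<Longrightarrow> b \<in> pcar B \<Longrightarrow> op a b = Some c \<Longrightarrow> (a, b) \<in> pdom op (pcar B) \<and> pval op a b = c"
    unfolding pdom_def pval_def by simp
  have car: "pcar (cA B F) = Pow F" "pbot (cA B F) = {}" "ptop (cA B F) = F"
    "\<And>x y. pmeet (cA B F) x y = Some (x \<inter> y)" "\<And>x y. pjoin (cA B F) x y = Some (x \<union> y)"
    "\<And>x y. pfus (cA B F) x y = Some (cfus B F x y)" "\<And>x y. pldiv (cA B F) x y = Some (cldiv B F x y)"
    "\<And>x y. prdiv (cA B F) x y = Some (crdiv B F x y)" "\<And>x y. ple (cA B F) x y = (x \<subseteq> y \<and> y \<subseteq> F)"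
    by (simp_all add: cA_def)
  show ?thesis unfolding partial_substructure_via_def car
  proof (intro conjI ballI allI impI)
    show "inj_on (emb F) (pcar B)"
    proof (rule inj_onI)
      fix a b assume ab: "a \<in> pcar B" "b \<in> pcar B" "emb F a = emb F b"
      have "ple B a b" using le_iff[OF ab(1,2)] ab(3) by simp
      moreover have "ple B b a" using le_iff[OF ab(2,1)] ab(3) by simp
      ultimately show "a = b" using anti[OF ab(1,2)] by simp
    qed
    show "emb F ` pcar B \<subseteq> Pow F" unfolding emb_def by blast
    show "emb F (pbot B) = {}" unfolding emb_def using fb by blast
    show "emb F (ptop B) = F" unfolding emb_def using fb by blast
  next
    fix a b assume ab: "a \<in> pcar B" "b \<in> pcar B"
    have "emb F b \<subseteq> F" unfolding emb_def by blast
    then show "ple B a b = (emb F a \<subseteq> emb F b \<and> emb F b \<subseteq> F)" using le_iff[OF ab] by simp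
  next
    fix a b c assume ab: "a \<in> pcar B" "b \<in> pcar B" and s: "pmeet B a b = Some c"
    from dom[where op="pmeet B", OF ab s] have d: "(a, b) \<in> pdom (pmeet B) (pcar B)" and v: "pval (pmeet B) a b = c" by auto
    have "emb F a \<inter> emb F b = emb F c"
    proof -
      have cB: "c \<in> pcar B" using clB ab s by blast
      have "c \<in> f \<longleftrightarrow> a \<in> f \<and> b \<in> f" if f: "f \<in> F" for f
      proof
        assume "c \<in> f" then show "a \<in> f \<and> b \<in> f" using up[OF f _ ab(1)] up[OF f _ ab(2)] mlb[OF d] v by blast
      next
        assume "a \<in> f \<and> b \<in> f" then show "c \<in> f" using fm[OF f d] v by blast
      qed
      then show ?thesis unfolding emb_def by blast
    qed
    then show "Some (emb F a \<inter> emb F b) = Some (emb F c)" by simp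
  next
    fix a b c assume ab: "a \<in> pcar B" "b \<in> pcar B" and s: "pjoin B a b = Some c"
    from dom[where op="pjoin B", OF ab s] have d: "(a, b) \<in> pdom (pjoin B) (pcar B)" and v: "pval (pjoin B) a b = c" by auto
    have "emb F a \<union> emb F b = emb F c"
    proof -
      have cB: "c \<in> pcar B" using clB ab s by blast
      have "c \<in> f \<longleftrightarrow> a \<in> f \<or> b \<in> f" if f: "f \<in> F" for f
      proof
        assume "c \<in> f" then show "a \<in> f \<or> b \<in> f" using fj[OF f d] v by blast
      next
        assume "a \<in> f \<or> b \<in> f" then show "c \<in> f" using up[OF f _ cB] jub[OF d] v by blast
      qed
      then show ?thesis unfolding emb_def by blast
    qed
    then show "Some (emb F a \<union> emb F b) = Some (emb F c)" by simp
  next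
    fix a b c assume ab: "a \<in> pcar B" "b \<in> pcar B" and s: "pfus B a b = Some c"
    from dom[where op="pfus B", OF ab s] have d: "(a, b) \<in> pdom (pfus B) (pcar B)" and v: "pval (pfus B) a b = c" by auto
    have "cfus B F (emb F a) (emb F b) = emb F c"
    proof
      show "cfus B F (emb F a) (emb F b) \<subseteq> emb F c"
      proof
        fix h assume "h \<in> cfus B F (emb F a) (emb F b)"
        then obtain f g where fg: "h \<in> F" "a \<in> f" "b \<in> g" "relR B f g h" unfolding cfus_def emb_def by blast
        then have "pval (pfus B) a b \<in> h" using d unfolding relR_def by blast
        then show "h \<in> emb F c" using fg v unfolding emb_def by blast
      qed
      show "emb F c \<subseteq> cfus B F (emb F a) (emb F b)"
      proof
        fix h assume "h \<in> emb F c"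
        then have h: "h \<in> F" "pval (pfus B) a b \<in> h" using v unfolding emb_def by auto
        then obtain f g where "f \<in> F" "g \<in> F" "a \<in> f" "b \<in> g" "relR B f g h"
          using Mf d unfolding condM_fus_def by blast
        then show "h \<in> cfus B F (emb F a) (emb F b)" using h unfolding cfus_def emb_def by blast
      qed
    qed
    then show "Some (cfus B F (emb F a) (emb F b)) = Some (emb F c)" by simp
  next
    fix a b c assume ab: "a \<in> pcar B" "b \<in> pcar B" and s: "pldiv B a b = Some c"
    from dom[where op="pldiv B", OF ab s] have d: "(a, b) \<in> pdom (pldiv B) (pcar B)" and v: "pval (pldiv B) a b = c" by auto
    have "cldiv B F (emb F a) (emb F b) = emb F c"
    proof
      show "emb F c \<subseteq> cldiv B F (emb F a) (emb F b)"
      proof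
        fix g assume "g \<in> emb F c"
        then have g: "g \<in> F" "pval (pldiv B) a b \<in> g" using v unfolding emb_def by auto
        have "\<forall>f\<in>emb F a. \<forall>h\<in>F. relR B f g h \<longrightarrow> h \<in> emb F b"
        proof (intro ballI impI)
          fix f h assume "f \<in> emb F a" "h \<in> F" "relR B f g h"
          then have "b \<in> h" using d g unfolding relR_def emb_def by blast
          then show "h \<in> emb F b" using \<open>h \<in> F\<close> unfolding emb_def by blast
        qed
        then show "g \<in> cldiv B F (emb F a) (emb F b)" using g unfolding cldiv_def by blast
      qed
      show "cldiv B F (emb F a) (emb F b) \<subseteq> emb F c"
      proof
        fix g assume g: "g \<in> cldiv B F (emb F a) (emb F b)"
        then have gF: "g \<in> F" unfolding cldiv_def by blast
        show "g \<in> emb F c"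
        proof (rule ccontr)
          assume "g \<notin> emb F c"
          then have "pval (pldiv B) a b \<notin> g" using v gF unfolding emb_def by blast
          then obtain f h where "f \<in> F" "h \<in> F" "a \<in> f" "b \<notin> h" "relR B f g h"
            using Ml d gF unfolding condM_ldiv_def by blast
          then show False using g unfolding cldiv_def emb_def by blast
        qed
      qed
    qed
    then show "Some (cldiv B F (emb F a) (emb F b)) = Some (emb F c)" by simp
  next
    fix a b c assume ab: "a \<in> pcar B" "b \<in> pcar B" and s: "prdiv B a b = Some c"
    from dom[where op="prdiv B", OF ab s] have d: "(a, b) \<in> pdom (prdiv B) (pcar B)" and v: "pval (prdiv B) a b = c" by auto
    have "crdiv B F (emb F a) (emb F b) = emb F c"
    proof
      show "emb F c \<subseteq> crdiv B F (emb F a) (emb F b)"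
      proof
        fix f assume "f \<in> emb F c"
        then have f: "f \<in> F" "pval (prdiv B) a b \<in> f" using v unfolding emb_def by auto
        have "\<forall>g\<in>emb F b. \<forall>h\<in>F. relR B f g h \<longrightarrow> h \<in> emb F a"
        proof (intro ballI impI)
          fix g h assume "g \<in> emb F b" "h \<in> F" "relR B f g h"
          then have "a \<in> h" using d f unfolding relR_def emb_def by blast
          then show "h \<in> emb F a" using \<open>h \<in> F\<close> unfolding emb_def by blast
        qed
        then show "f \<in> crdiv B F (emb F a) (emb F b)" using f unfolding crdiv_def by blast
      qed
      show "crdiv B F (emb F a) (emb F b) \<subseteq> emb F c"
      proof
        fix f assume f: "f \<in> crdiv B F (emb F a) (emb F b)"
        then have fF: "f \<in> F" unfolding crdiv_def by blast
        show "f \<in> emb F c"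
        proof (rule ccontr)
          assume "f \<notin> emb F c"
          then have "pval (prdiv B) a b \<notin> f" using v fF unfolding emb_def by blast
          then obtain g h where "g \<in> F" "h \<in> F" "b \<in> g" "a \<notin> h" "relR B f g h"
            using Mr d fF unfolding condM_rdiv_def by blast
          then show False using f unfolding crdiv_def emb_def by blast
        qed
      qed
    qed
    then show "Some (crdiv B F (emb F a) (emb F b)) = Some (emb F c)" by simp
  qed
qed


theorem mainTheorem15:
  fixes B :: "'a pstruct"
  assumes "partial_structure B"
  shows "(\<forall>(A :: 'b pstruct) e. square_increasing_brdg A \<and> partial_substructure_via B A e
            \<longrightarrow> representable_sq B)
     \<and> (representable_sq B \<longrightarrow>
          (\<exists>(A :: 'a set set pstruct) e. square_increasing_brdg A \<and> partial_substructure_via B A e))"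
proof (intro conjI allI impI)
  fix A :: "'b pstruct" and e assume h: "square_increasing_brdg A \<and> partial_substructure_via B A e"
  show "representable_sq B" using dir1[OF assms conjunct1[OF h] conjunct2[OF h]] .
next
  assume "representable_sq B"
  then obtain F where pbl: "partial_bounded_lattice B"
    and FF: "\<forall>f \<in> F. prime_filter B f \<and> closed_filter B f"
    and D: "condD B F" and Mf: "condM_fus B F" and Ml: "condM_ldiv B F" and Mr: "condM_rdiv B F"
    unfolding representable_sq_def by blast
  have FF': "\<forall>f\<in>F. closed_filter B f" using FF by blast
  have "square_increasing_brdg (cA B F) \<and> partial_substructure_via B (cA B F) (emb F)"
    using cA_sq[OF FF'] cA_emb[OF assms pbl FF D Mf Ml Mr] by blast
  then show "\<exists>(A :: 'a set set pstruct) e. square_increasing_brdg A \<and> partial_substructure_via B A e"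
    by blast
qed

end
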